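(* Let $\mu\in\mathbb{C}$ with $\mu\neq-1,-2,-3,\ldots$ and $\ell\in\mathbb{N}_0$. Then for every $j\in\mathbb{N}_0$ $$M_j^{\mu,\ell}(x)=\frac{\Gamma(j+\mu+1)}{\Gamma(j+\frac{\mu+1}{2})}\sum_{k=0}^{j}\sum_{i=0}^{\ell-k}(-1)^k\frac{\Gamma(j-k+\frac{\mu+1}{2})\,(2\ell-i)!}{k!\,\Gamma(j-k+\mu+1)\,(\ell-i-k)!\,i!}L_{j-k}^\mu(x)\,x^i=\sum_{k=0}^{j+\ell}\beta_{j,k}^{\mu,\ell}x^k,$$ where $$\beta_{j,k}^{\mu,\ell}=\frac{\Gamma(j+\mu+1)}{\Gamma(j+\frac{\mu+1}{2})}\sum_{(m,n)\in S_{j,k}^{\mu,\ell}}(-1)^{m+n}\frac{\Gamma(j-m+\frac{\mu+1}{2})}{\Gamma(n+\mu+1)}\cdot\frac{(2\ell+n-k)!}{m!\,n!\,(k-n)!\,(j-m-n)!\,(\ell+n-k-m)!}$$ and $S_{j,k}^{\mu,\ell}=\{(m,n)\in\mathbb{N}_0^2:\ 0\leq n\leq j-m,\ 0\leq k-n\leq\ell-m\}$.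
   Context: $L_n^\alpha$ denotes the Laguerre polynomial $L_n^\alpha(x)=\sum_{k=0}^n\frac{(-1)^k}{k!}\binom{n+\alpha}{n-k}x^k$ (inner sums over empty ranges are zero). Let $I_\alpha$, $K_\alpha$ be the modified Bessel functions and set $\widetilde I_\alpha(z)=(z/2)^{-\alpha}I_\alpha(z)$, $\widetilde K_\alpha(z)=(z/2)^{-\alpha}K_\alpha(z)$. For $\mu\in\mathbb{C}$, $\ell\in\mathbb{N}_0$, $x>0$ and $t$ near $0$ define $$G^{\mu,\ell}(t,x)=\frac{1}{(1-t)^{\ell+\frac{\mu+3}{2}}}\left(\frac x2\right)^{2\ell+1}e^{\frac x2}\,\widetilde I_{\frac\mu2}\!\left(\frac{tx}{2(1-t)}\right)\widetilde K_{\ell+\frac12}\!\left(\frac{x}{2(1-t)}\right),$$ and $M_j^{\mu,\ell}(x)=\frac{\Gamma(j+\mu+1)}{j!\,2^\mu\,\Gamma(j+\frac{\mu+1}{2})}\left.\frac{\partial^j}{\partial t^j}\right|_{t=0}G^{\mu,\ell}(t,x)$. *)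

theory Defs
  imports "HOL-Analysis.Analysis"
begin

definition laguerre :: "nat \<Rightarrow> complex \<Rightarrow> complex \<Rightarrow> complex" where
  "laguerre n \<alpha> z = (\<Sum>k\<le>n. (-1)^k / fact k * ((of_nat n + \<alpha>) gchoose (n - k)) * z^k)"

definition besselI :: "complex \<Rightarrow> complex \<Rightarrow> complex" where
  "besselI \<nu> z = (z/2) powr \<nu> * (\<Sum>m. (z/2)^(2*m) * rGamma (of_nat m + \<nu> + 1) / fact m)"

text \<open>Modified Bessel function of the second kind, for non-integer order nu
  (DLMF 10.27.4); it is only used at half-integer orders below.\<close>
definition besselK :: "complex \<Rightarrow> complex \<Rightarrow> complex" where
  "besselK \<nu> z = complex_of_real pi / 2 * (besselI (-\<nu>) z - besselI \<nu> z) / sin (\<nu> * complex_of_real pi)"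

text \<open>Normalized Bessel functions (z/2)^(-nu) I_nu(z) (entire in z, given by its
  power series, so that its value at z = 0 is the removable-singularity value) and
  (z/2)^(-nu) K_nu(z).\<close>
definition tildeI :: "complex \<Rightarrow> complex \<Rightarrow> complex" where
  "tildeI \<nu> z = (\<Sum>m. (z/2)^(2*m) * rGamma (of_nat m + \<nu> + 1) / fact m)"

definition tildeK :: "complex \<Rightarrow> complex \<Rightarrow> complex" where
  "tildeK \<nu> z = (z/2) powr (-\<nu>) * besselK \<nu> z"

definition G :: "complex \<Rightarrow> nat \<Rightarrow> complex \<Rightarrow> complex \<Rightarrow> complex" where
  "G \<mu> l t x = 1 / (1 - t) powr (of_nat l + (\<mu> + 3) / 2) * (x/2)^(2*l+1) * exp (x/2)
      * tildeI (\<mu>/2) (t * x / (2 * (1 - t))) * tildeK (of_nat l + 1/2) (x / (2 * (1 - t)))"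

definition M :: "complex \<Rightarrow> nat \<Rightarrow> nat \<Rightarrow> real \<Rightarrow> complex" where
  "M \<mu> l j x = Gamma (of_nat j + \<mu> + 1) / (fact j * 2 powr \<mu> * Gamma (of_nat j + (\<mu> + 1) / 2))
      * (deriv ^^ j) (\<lambda>t. G \<mu> l t (complex_of_real x)) 0"

definition Sidx :: "nat \<Rightarrow> nat \<Rightarrow> nat \<Rightarrow> (nat \<times> nat) set" where
  "Sidx l j k = {(m, n). n + m \<le> j \<and> n \<le> k \<and> k - n + m \<le> l}"

definition beta :: "complex \<Rightarrow> nat \<Rightarrow> nat \<Rightarrow> nat \<Rightarrow> complex" where
  "beta \<mu> l j k = Gamma (of_nat j + \<mu> + 1) / Gamma (of_nat j + (\<mu> + 1) / 2) *
     (\<Sum>(m, n)\<in>Sidx l j k. (-1)^(m+n) * Gamma (of_nat (j - m) + (\<mu> + 1) / 2) / Gamma (of_nat n + \<mu> + 1)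
        * fact (2*l + n - k) / (fact m * fact n * fact (k - n) * fact (j - m - n) * fact (l + n - k - m)))"

end

theory Submission
  imports Defs "HOL-Complex_Analysis.Complex_Analysis"
begin

lemma rGamma_step: "rGamma (z::complex) = z * rGamma (z + 1)"
  using rGamma_plus1[of z] by simp

lemma tI_summable: "summable (\<lambda>m. (z/2)^(2*m) * rGamma (of_nat m + \<nu> + 1) / fact m :: complex)"
proof (rule summable_ratio_test[where c="1/2" and N="nat \<lceil>2*norm \<nu> + 2*norm (z/2)^2 + 2\<rceil>"])
  fix n assume n: "n \<ge> nat \<lceil>2*norm \<nu> + 2*norm (z/2)^2 + 2\<rceil>"
  hence n1: "real n \<ge> 2*norm \<nu> + 2*norm (z/2)^2 + 2" by linarith
  have nn0: "norm (of_nat (Suc n) :: complex) = real n + 1" by (simp only: norm_of_nat)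
  have "norm (of_nat n + \<nu> + 1) \<ge> real n + 1 - norm \<nu>"
    using norm_triangle_ineq2[of "of_nat (Suc n)" "-\<nu>"] nn0 by (simp add: algebra_simps)
  hence nn: "norm (of_nat n + \<nu> + 1) \<ge> 1" "norm (of_nat n + \<nu> + 1) \<ge> 2 * norm (z/2)^2" using n1 norm_ge_zero[of \<nu>] zero_le_power2[of "norm (z/2)"] by linarith+
  have ne: "of_nat n + \<nu> + 1 \<noteq> 0" using nn by auto
  have r: "rGamma (of_nat (Suc n) + \<nu> + 1) = rGamma (of_nat n + \<nu> + 1) / (of_nat n + \<nu> + 1)"
  proof -
    have "rGamma (of_nat n + \<nu> + 1) = (of_nat n + \<nu> + 1) * rGamma (of_nat n + \<nu> + 1 + 1)"
      by (rule rGamma_step)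
    moreover have "of_nat (Suc n) + \<nu> + 1 = of_nat n + \<nu> + 1 + (1::complex)" by simp
    ultimately show ?thesis using ne by (simp add: field_simps)
  qed
  have e1: "(z/2)^(2*Suc n) = (z/2)^2 * (z/2)^(2*n)" by (simp add: power_add[symmetric])
  have e3: "(fact (Suc n) :: complex) = of_nat (Suc n) * fact n" by (simp add: fact_Suc)
  have eq: "(z/2)^(2*Suc n) * rGamma (of_nat (Suc n) + \<nu> + 1) / fact (Suc n)
      = ((z/2)^(2*n) * rGamma (of_nat n + \<nu> + 1) / fact n) * ((z/2)^2 / ((of_nat n + \<nu> + 1) * of_nat (Suc n)))"
    unfolding r e1 e3 by (simp only: mult_ac divide_inverse inverse_mult_distrib)
  have "norm ((z/2)^2 / ((of_nat n + \<nu> + 1) * of_nat (Suc n))) \<le> 1/2"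
  proof -
    have "norm ((z/2)^2 / ((of_nat n + \<nu> + 1) * of_nat (Suc n))) = norm (z/2)^2 / (norm (of_nat n + \<nu> + 1) * real (Suc n))"
      by (simp add: norm_divide norm_mult norm_power del: of_nat_Suc)
    also have "\<dots> \<le> norm (z/2)^2 / norm (of_nat n + \<nu> + 1)"
      using nn by (intro divide_left_mono mult_pos_pos) (auto intro: mult_le_cancel_left1[THEN iffD2] simp: mult_pos_pos)
    also have "\<dots> \<le> 1/2" using nn by (simp add: divide_le_eq)
    finally show ?thesis .
  qed
  thus "norm ((z/2)^(2*Suc n) * rGamma (of_nat (Suc n) + \<nu> + 1) / fact (Suc n))
     \<le> 1/2 * norm ((z/2)^(2*n) * rGamma (of_nat n + \<nu> + 1) / fact n)"
    unfolding eq norm_mult using mult_left_mono[OF _ norm_ge_zero] by (metis mult.commute)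
qed simp

lemma tI_sums: "(\<lambda>m. (z/2)^(2*m) * rGamma (of_nat m + \<nu> + 1) / fact m) sums tildeI \<nu> z"
  unfolding tildeI_def using tI_summable by (simp add: summable_sums)

lemma tI_rec: "tildeI (\<nu> - 1) z - (z/2)^2 * tildeI (\<nu> + 1) z = \<nu> * tildeI \<nu> z"
proof -
  define B where "B m = (z/2)^(2*m) * rGamma (of_nat m + \<nu> + 1) / fact m" for m
  have s1: "(\<lambda>m. (z/2)^(2*m) * rGamma (of_nat m + \<nu>) / fact m) sums tildeI (\<nu>-1) z"
    using tI_sums[of z "\<nu> - 1"] by (simp add: algebra_simps)
  have s2: "(\<lambda>m. (z/2)^2 * ((z/2)^(2*m) * rGamma (of_nat m + (\<nu>+1) + 1) / fact m)) sums ((z/2)^2 * tildeI (\<nu>+1) z)"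
    using tI_sums[of z "\<nu> + 1"] by (rule sums_mult)
  have "(\<lambda>m. of_nat (Suc m) * B (Suc m)) = (\<lambda>m. (z/2)^2 * ((z/2)^(2*m) * rGamma (of_nat m + (\<nu>+1) + 1) / fact m))"
  proof
    fix m
    have e1: "(z/2)^(2*Suc m) = (z/2)^2 * (z/2)^(2*m)" by (simp add: power_add[symmetric])
    have e2: "of_nat (Suc m) + \<nu> + 1 = of_nat m + (\<nu>+1) + (1::complex)" by simp
    have e3: "(fact (Suc m) :: complex) = of_nat (Suc m) * fact m" by (simp add: fact_Suc)
    show "of_nat (Suc m) * B (Suc m) = (z/2)^2 * ((z/2)^(2*m) * rGamma (of_nat m + (\<nu>+1) + 1) / fact m)"
      unfolding B_def e1 e2 e3 by (simp del: of_nat_Suc)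
  qed
  with s2 have "(\<lambda>m. of_nat (Suc m) * B (Suc m)) sums ((z/2)^2 * tildeI (\<nu>+1) z)" by simp
  hence s3: "(\<lambda>m. of_nat m * B m) sums ((z/2)^2 * tildeI (\<nu>+1) z)"
    using sums_Suc_iff[of "\<lambda>m. of_nat m * B m"] by simp
  have "(\<lambda>m. (z/2)^(2*m) * rGamma (of_nat m + \<nu>) / fact m - of_nat m * B m) = (\<lambda>m. \<nu> * B m)"
  proof
    fix m
    have "rGamma (of_nat m + \<nu>) = (of_nat m + \<nu>) * rGamma (of_nat m + \<nu> + 1)"
      by (rule rGamma_step)
    thus "(z/2)^(2*m) * rGamma (of_nat m + \<nu>) / fact m - of_nat m * B m = \<nu> * B m"
      by (simp add: B_def field_simps)
  qed
  with sums_diff[OF s1 s3] have "(\<lambda>m. \<nu> * B m) sums (tildeI (\<nu> - 1) z - (z/2)^2 * tildeI (\<nu> + 1) z)" by simp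
  moreover have "(\<lambda>m. \<nu> * B m) sums (\<nu> * tildeI \<nu> z)"
    using tI_sums[of z \<nu>] unfolding B_def by (rule sums_mult)
  ultimately show ?thesis by (rule sums_unique2)
qed

definition gg :: "complex \<Rightarrow> complex \<Rightarrow> complex" where
  "gg \<nu> z = (z/2) powr (-2*\<nu>) * tildeI (-\<nu>) z - tildeI \<nu> z"

lemma powr_int_shift:
  assumes "(w::complex) \<noteq> 0"
  shows "w powr (c - 2) = w powr c / w^2" "w powr (c + 2) = w powr c * w^2"
proof -
  have w2: "w powr 2 = w^2" using powr_nat'[of w 2] assms by simp
  show "w powr (c - 2) = w powr c / w^2"
    using powr_add[of w c "-2"] powr_minus[of w 2] w2 by (simp add: divide_inverse)
  show "w powr (c + 2) = w powr c * w^2"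
    using powr_add[of w c 2] w2 by simp
qed

lemma gg_aux: "(q::complex) \<noteq> 0 \<Longrightarrow> (p / q) * (q * A - v * B) - (C - v * D) / q = ((p * q) * A - C - v * (p * B - D)) / q"
  by (simp add: field_simps)

lemma gg_rec:
  assumes z: "z \<noteq> 0"
  shows "gg (\<nu>+1) z = (gg (\<nu>-1) z - \<nu> * gg \<nu> z) / (z/2)^2"
proof -
  define p where "p = (z/2) powr (-2*\<nu>)"
  define q where "q = (z/2)^2"
  have q0: "q \<noteq> 0" using z by (simp add: q_def)
  have p1: "(z/2) powr (-2*(\<nu>+1)) = p / q"
  proof -
    have "-2*(\<nu>+1) = -2*\<nu> - 2" by simp
    thus ?thesis using powr_int_shift(1)[of "z/2" "-2*\<nu>"] z by (simp only: p_def q_def) simp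
  qed
  have p2: "(z/2) powr (-2*(\<nu>-1)) = p * q"
  proof -
    have "-2*(\<nu>-1) = -2*\<nu> + 2" by simp
    thus ?thesis using powr_int_shift(2)[of "z/2" "-2*\<nu>"] z by (simp only: p_def q_def) simp
  qed
  have r1: "tildeI (\<nu> - 1) z - q * tildeI (\<nu> + 1) z = \<nu> * tildeI \<nu> z"
    using tI_rec[of \<nu> z] by (simp add: q_def)
  have r2: "tildeI (-\<nu> - 1) z - q * tildeI (-\<nu> + 1) z = -\<nu> * tildeI (-\<nu>) z"
    using tI_rec[of "-\<nu>" z] by (simp add: q_def)
  have "-(\<nu>+1) = -\<nu> - 1" by simp
  hence e0: "tildeI (-(\<nu>+1)) z = tildeI (-\<nu> - 1) z" by (simp only:)
  have e1: "tildeI (-(\<nu>+1)) z = q * tildeI (-\<nu> + 1) z - \<nu> * tildeI (-\<nu>) z"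
    unfolding e0 using r2 by (simp add: algebra_simps)
  have e2: "tildeI (\<nu>+1) z = (tildeI (\<nu> - 1) z - \<nu> * tildeI \<nu> z) / q"
    using r1 q0 by (simp add: field_simps)
  have e3: "tildeI (-(\<nu>-1)) z = tildeI (-\<nu> + 1) z" by (simp add: algebra_simps)
  show ?thesis
    unfolding gg_def p1 p2 e1 e2 e3 q_def[symmetric] p_def[symmetric]
    using gg_aux[OF q0] by simp
qed

lemma besselI_tI: "besselI \<nu> z = (z/2) powr \<nu> * tildeI \<nu> z"
  unfolding besselI_def tildeI_def ..

lemma tK_aux: "(P::complex) * (c * (P * A - Q * B) / s) = c * ((P * P) * A - (P * Q) * B) / s"
  by (simp add: divide_inverse algebra_simps)

lemma tildeK_gg:
  assumes z: "z \<noteq> 0"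
  shows "tildeK \<nu> z = of_real pi / 2 * gg \<nu> z / sin (\<nu> * of_real pi)"
proof -
  have a: "(z/2) powr (-\<nu>) * (z/2) powr (-\<nu>) = (z/2) powr (-2*\<nu>)"
    using powr_add[of "z/2" "-\<nu>" "-\<nu>"] by simp
  have b: "(z/2) powr (-\<nu>) * (z/2) powr \<nu> = 1"
    using powr_add[of "z/2" "-\<nu>" "\<nu>"] z by simp
  show ?thesis
    unfolding tildeK_def besselK_def besselI_tI gg_def tK_aux a
    by (simp add: b)
qed

lemma rG_half: "rGamma (of_nat m + 1/2 :: complex) * of_real (sqrt pi) = 4^m * fact m / fact (2*m)"
proof (induction m)
  case 0
  show ?case using Gamma_one_half_complex by (simp add: rGamma_inverse_Gamma)
next
  case (Suc m)
  have ne: "of_nat m + 1/2 \<noteq> (0::complex)"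
  proof
    assume "of_nat m + 1/2 = (0::complex)"
    hence "Re (of_nat m + 1/2 :: complex) = 0" by simp
    thus False by simp
  qed
  have "rGamma (of_nat m + 1/2 :: complex) = (of_nat m + 1/2) * rGamma (of_nat m + 1/2 + 1)"
    by (rule rGamma_step)
  hence r: "rGamma (of_nat (Suc m) + 1/2 :: complex) = rGamma (of_nat m + 1/2) / (of_nat m + 1/2)"
    using ne by (simp add: field_simps add_ac)
  have f: "(fact (2 * Suc m) :: complex) = (2 * of_nat m + 2) * (2 * of_nat m + 1) * fact (2*m)"
    by (simp add: fact_Suc algebra_simps)
  have "rGamma (of_nat (Suc m) + 1/2 :: complex) * of_real (sqrt pi) = (rGamma (of_nat m + 1/2) * of_real (sqrt pi)) / (of_nat m + 1/2)"
    unfolding r by simp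
  also have "\<dots> = 4^m * fact m / fact (2*m) / (of_nat m + 1/2)" using Suc.IH by simp
  also have "\<dots> = 4^(Suc m) * fact (Suc m) / fact (2 * Suc m)"
  proof -
    have n1: "(2 * of_nat m + 1 :: complex) \<noteq> 0"
    proof -
      have "(2 * of_nat m + 1 :: complex) = of_nat (2*m+1)" by simp
      thus ?thesis by (simp only: of_nat_eq_0_iff)
    qed
    have n2: "(of_nat m + 1 :: complex) \<noteq> 0"
    proof -
      have "(of_nat m + 1 :: complex) = of_nat (m+1)" by simp
      thus ?thesis by (simp only: of_nat_eq_0_iff)
    qed
    have n3: "(fact (2*m) :: complex) \<noteq> 0" by simp
    have h: "(of_nat m + 1/2 :: complex) = (2 * of_nat m + 1) / 2" by simp
    have h2: "(2 * of_nat m + 2 :: complex) = 2 * (of_nat m + 1)" by simp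
    have h3: "(fact (Suc m) :: complex) = (of_nat m + 1) * fact m" by (simp add: fact_Suc)
    have aux: "\<And>F u k c A. (F::complex) \<noteq> 0 \<Longrightarrow> u \<noteq> 0 \<Longrightarrow> k \<noteq> 0 \<Longrightarrow>
        (c * A / F) / (u/2) = (4 * c) * (k * A) / ((2 * k) * u * F)"
      by (simp add: field_simps)
    show ?thesis unfolding f h h2 h3 power_Suc by (rule aux[OF n3 n1 n2])
  qed
  finally show ?case .
qed

lemma exp_grouped: "(\<lambda>m. (-z)^(2*m) / fact (2*m) + (-z)^(2*m+1) / fact (2*m+1)) sums exp (-z::complex)"
proof -
  have "(\<lambda>n. (-z)^n /\<^sub>R fact n) sums exp (-z)" by (rule exp_converges)
  hence "(\<lambda>m. sum (\<lambda>n. (-z)^n /\<^sub>R fact n) {m*2..<m*2+2}) sums exp (-z)"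
    by (rule sums_group) simp
  moreover have "sum (\<lambda>n. (-z)^n /\<^sub>R fact n) {m*2..<m*2+2} = (-z)^(2*m) / fact (2*m) + (-z)^(2*m+1) / fact (2*m+1)" for m
  proof -
    have "{m*2..<m*2+2} = {2*m, 2*m+1}" by auto
    thus ?thesis by (simp add: scaleR_conv_of_real field_simps)
  qed
  ultimately show ?thesis by simp
qed

lemma four_pow: "((2::complex)^m)^2 = 4^m"
proof -
  have "((2::complex)^m)^2 = (2^2)^m" by (simp only: power_mult[symmetric] mult.commute)
  thus ?thesis by simp
qed

lemma aux1: "(k::complex) \<noteq> 0 \<Longrightarrow> F \<noteq> 0 \<Longrightarrow> (4 * c) * (k * A) / ((2 * k) * F) = 2 * c * A / F"
  by (simp add: field_simps)

lemma aux2: "(X::complex) * s = c / F \<Longrightarrow> s \<noteq> 0 \<Longrightarrow> X = c / (F * s)"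
proof -
  assume a: "X * s = c / F" and s: "s \<noteq> 0"
  have "X = (X * s) / s" using s by simp
  also have "\<dots> = c / F / s" using a by simp
  finally show ?thesis by (simp add: divide_divide_eq_left)
qed

lemma aux3: "(Q::complex) \<noteq> 0 \<Longrightarrow> fm \<noteq> 0 \<Longrightarrow> F \<noteq> 0 \<Longrightarrow> s \<noteq> 0 \<Longrightarrow>
   (Z / Q) * (2 * Q * fm / (F * s)) / fm = 2 * Z / (F * s)"
  by (simp add: field_simps)

lemma aux4: "(z::complex) \<noteq> 0 \<Longrightarrow> s \<noteq> 0 \<Longrightarrow> A \<noteq> 0 \<Longrightarrow> B \<noteq> 0 \<Longrightarrow>
   (2/z) * (P / (A * s)) - 2 * P / (B * s) = (2 / (s * z)) * (P / A + (- (z * P)) / B)"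
  by (simp add: field_simps)

lemma negz: "(-z::complex)^(2*m) = z^(2*m)" "(-z::complex)^(2*m+1) = - (z * z^(2*m))"
  by (simp_all add: power_mult)

lemma gg_half:
  assumes z: "z \<noteq> 0"
  shows "gg (1/2) z = 2 * exp (-z) / (of_real (sqrt pi) * z)"
proof -
  define s where "s = (of_real (sqrt pi) :: complex)"
  have s0: "s \<noteq> 0" by (simp add: s_def)
  have p: "(z/2) powr (-2*(1/2)) = 2 / z"
  proof -
    have "(z/2) powr (-2*(1/2)) = (z/2) powr (-1)" by simp
    also have "\<dots> = inverse (z/2)" by (simp add: powr_minus)
    finally show ?thesis by simp
  qed
  have S1: "(\<lambda>m. z^(2*m) / (fact (2*m) * s)) sums tildeI (-(1/2)) z"
  proof -
    have "(z/2)^(2*m) * rGamma (of_nat m + -(1/2) + 1) / fact m = z^(2*m) / (fact (2*m) * s)" for m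
    proof -
      have e: "of_nat m + -(1/2) + 1 = (of_nat m + 1/2 :: complex)" by simp
      have "rGamma (of_nat m + 1/2 :: complex) = 4^m * fact m / fact (2*m) / s"
        using rG_half[of m] s0 by (simp add: s_def field_simps)
      thus ?thesis unfolding e using s0
        by (simp add: power_mult_distrib power_mult four_pow field_simps)
    qed
    thus ?thesis using tI_sums[of z "-(1/2)"] by simp
  qed
  have S2: "(\<lambda>m. 2 * z^(2*m) / (fact (2*m+1) * s)) sums tildeI (1/2) z"
  proof -
    have "(z/2)^(2*m) * rGamma (of_nat m + 1/2 + 1) / fact m = 2 * z^(2*m) / (fact (2*m+1) * s)" for m
    proof -
      have e: "of_nat m + 1/2 + 1 = (of_nat (Suc m) + 1/2 :: complex)" by simp
      have k0: "(of_nat m + 1 :: complex) \<noteq> 0"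
      proof -
        have "(of_nat m + 1 :: complex) = of_nat (Suc m)" by simp
        thus ?thesis by (simp only: of_nat_eq_0_iff)
      qed
      have f0: "(fact (2*m+1) :: complex) \<noteq> 0" by (rule fact_nonzero)
      have u0: "(1 + 2 * of_nat m :: complex) \<noteq> 0"
      proof -
        have "(1 + 2 * of_nat m :: complex) = of_nat (Suc (2*m))" by simp
        thus ?thesis by (simp only: of_nat_eq_0_iff)
      qed
      have "rGamma (of_nat (Suc m) + 1/2 :: complex) * s = 4^(Suc m) * fact (Suc m) / fact (2*Suc m)"
        using rG_half[of "Suc m"] by (simp only: s_def)
      also have "\<dots> = (4 * 4^m) * ((of_nat m + 1) * fact m) / ((2 * (of_nat m + 1)) * fact (2*m+1))"
      proof -
        have "2 * Suc m = Suc (2*m+1)" by simp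
        hence "(fact (2 * Suc m) :: complex) = of_nat (Suc (2*m+1)) * fact (2*m+1)"
          by (simp only: fact_Suc)
        also have "of_nat (Suc (2*m+1)) = (2 * (of_nat m + 1) :: complex)" by simp
        finally have "(fact (2 * Suc m) :: complex) = 2 * (of_nat m + 1) * fact (2*m+1)" .
        moreover have "(fact (Suc m) :: complex) = (of_nat m + 1) * fact m" by (simp add: fact_Suc)
        ultimately show ?thesis by (simp only: power_Suc)
      qed
      also have "\<dots> = 2 * 4^m * fact m / fact (2*m+1)"
        by (rule aux1[OF k0 f0])
      finally have R: "rGamma (of_nat (Suc m) + 1/2 :: complex) = 2 * 4^m * fact m / (fact (2*m+1) * s)"
        by (rule aux2[OF _ s0])
      have zz: "(z/2)^(2*m) = z^(2*m) / 4^m"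
        by (simp add: power_divide power_mult four_pow)
      show ?thesis unfolding e R zz by (rule aux3) (use f0 s0 in simp_all)
    qed
    thus ?thesis using tI_sums[of z "1/2"] by simp
  qed
  have "(\<lambda>m. (2/z) * (z^(2*m) / (fact (2*m) * s)) - 2 * z^(2*m) / (fact (2*m+1) * s))
      sums ((2/z) * tildeI (-(1/2)) z - tildeI (1/2) z)"
    by (intro sums_diff sums_mult S1 S2)
  moreover have "(\<lambda>m. (2/z) * (z^(2*m) / (fact (2*m) * s)) - 2 * z^(2*m) / (fact (2*m+1) * s))
      = (\<lambda>m. (2 / (s * z)) * ((-z)^(2*m) / fact (2*m) + (-z)^(2*m+1) / fact (2*m+1)))"
    using z s0 by (intro ext) (simp only: negz aux4[OF z s0 fact_nonzero fact_nonzero])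
  ultimately have "(\<lambda>m. (2 / (s * z)) * ((-z)^(2*m) / fact (2*m) + (-z)^(2*m+1) / fact (2*m+1)))
      sums ((2/z) * tildeI (-(1/2)) z - tildeI (1/2) z)" by simp
  moreover have "(\<lambda>m. (2 / (s * z)) * ((-z)^(2*m) / fact (2*m) + (-z)^(2*m+1) / fact (2*m+1)))
      sums ((2 / (s * z)) * exp (-z))"
    by (intro sums_mult exp_grouped)
  ultimately have "(2/z) * tildeI (-(1/2)) z - tildeI (1/2) z = (2 / (s * z)) * exp (-z)"
    by (rule sums_unique2)
  thus ?thesis unfolding gg_def p s_def by simp
qed

lemma ofnat_nz [simp]:
  "(of_nat n + numeral k :: complex) \<noteq> 0" "(numeral k + of_nat n :: complex) \<noteq> 0"
  "(of_nat n + 1 :: complex) \<noteq> 0" "(1 + of_nat n :: complex) \<noteq> 0"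
proof -
  have "(of_nat n + numeral k :: complex) = of_nat (n + numeral k)" by simp
  thus "(of_nat n + numeral k :: complex) \<noteq> 0" by (simp only: of_nat_eq_0_iff) simp
  thus "(numeral k + of_nat n :: complex) \<noteq> 0" by (simp add: add.commute)
  have "(of_nat n + 1 :: complex) = of_nat (Suc n)" by simp
  thus "(of_nat n + 1 :: complex) \<noteq> 0" by (simp only: of_nat_eq_0_iff)
  thus "(1 + of_nat n :: complex) \<noteq> 0" by (simp add: add.commute)
qed

definition cK :: "nat \<Rightarrow> nat \<Rightarrow> complex" where
  "cK l i = (if i \<le> l then fact (l+i) / (fact i * fact (l-i)) else 0)"

definition Sp :: "nat \<Rightarrow> complex \<Rightarrow> complex" where
  "Sp l u = (\<Sum>i\<le>l. cK l i * u^i)"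

definition Kc :: "nat \<Rightarrow> complex \<Rightarrow> complex" where
  "Kc l z = 2^l * of_real (sqrt pi) * exp (-z) * (\<Sum>i\<le>l. cK l i / (2^i * z^(l+1+i)))"

lemma cK_aux: "(J::complex) \<noteq> 0 \<Longrightarrow> R2 \<noteq> 0 \<Longrightarrow> R1 \<noteq> 0 \<Longrightarrow> fj \<noteq> 0 \<Longrightarrow> fr \<noteq> 0 \<Longrightarrow>
  K = R2 * R1 + 2 * c * J \<Longrightarrow>
  K * F / (J * fj * (R2 * R1 * fr)) = F / (J * fj * fr) + c * (2 * (F / (fj * (R2 * R1 * fr))))"
  by (simp add: field_simps)

lemma cK_aux2: "(k::complex) \<noteq> 0 \<Longrightarrow> fl \<noteq> 0 \<Longrightarrow> f1 \<noteq> 0 \<Longrightarrow> (c * (2 * k) * F) / (k * fl * f1) = 0 + c * (2 * (F / (fl * f1)))"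
  by (simp add: field_simps)

lemma cK_rec: "cK (l+2) i = cK l i + (2 * of_nat l + 3) * (if i = 0 then 0 else 2 * cK (l+1) (i-1))"
proof (cases i)
  case 0
  then show ?thesis by (simp add: cK_def)
next
  case (Suc j)
  show ?thesis
  proof (cases "i \<le> l")
    case True
    then obtain r where l: "l = j + 1 + r" using Suc by (metis add.commute le_iff_add plus_1_eq_Suc)
    have a1: "l+2+i = 2*j+r+4" "l+2-i = r+2" "i = j+1" "l+i = 2*j+r+2" "l-i = r"
      "l+1+(i-1) = 2*j+r+2" "l+1-(i-1) = r+2" "i-1 = j" using l Suc by simp_all
    have c1: "i \<le> l+2" "i \<le> l" "i-1 \<le> l+1" using True by simp_all
    have e1: "cK (l+2) i = fact (2*j+r+4) / (fact (j+1) * fact (r+2))"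
      unfolding cK_def if_P[OF c1(1)] a1(1,2) a1(3)[symmetric] ..
    have e2: "cK l i = fact (2*j+r+2) / (fact (j+1) * fact r)"
      unfolding cK_def if_P[OF c1(2)] a1(4,5) a1(3)[symmetric] ..
    have e3: "cK (l+1) (i-1) = fact (2*j+r+2) / (fact j * fact (r+2))"
      unfolding cK_def if_P[OF c1(3)] a1(6,7) unfolding a1(8) ..
    define N where "N = 2*j+r+2"
    have f4: "(fact (2*j+r+4) :: complex) = (of_nat N + 2) * (of_nat N + 1) * fact N"
      unfolding N_def by (simp add: fact_Suc numeral_eq_Suc algebra_simps)
    have f5: "(fact (j+1) :: complex) = (of_nat j + 1) * fact j" by (simp add: fact_Suc)
    have f6: "(fact (r+2) :: complex) = (of_nat r + 2) * (of_nat r + 1) * fact r"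
      by (simp add: fact_Suc numeral_eq_Suc algebra_simps)
    have nz: "(of_nat j + 1 :: complex) \<noteq> 0" "(of_nat r + 2 :: complex) \<noteq> 0" "(of_nat r + 1 :: complex) \<noteq> 0"
      by (metis of_nat_Suc of_nat_eq_0_iff nat.distinct(1) add.commute,
          metis of_nat_numeral of_nat_add of_nat_eq_0_iff add_is_0 zero_neq_numeral,
          metis of_nat_Suc of_nat_eq_0_iff nat.distinct(1) add.commute)
    have key: "(of_nat N + 2) * (of_nat N + 1) = (of_nat r + 2) * (of_nat r + 1)
        + 2 * (2 * of_nat l + 3) * (of_nat j + 1 :: complex)"
      unfolding N_def l by (simp add: algebra_simps)
    have main: "(of_nat N + 2) * (of_nat N + 1) * fact N / ((of_nat j + 1 :: complex) * fact j * ((of_nat r + 2) * (of_nat r + 1) * fact r))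
       = fact N / ((of_nat j + 1) * fact j * fact r) + (2 * of_nat l + 3) * (2 * (fact N / (fact j * ((of_nat r + 2) * (of_nat r + 1) * fact r))))"
      by (rule cK_aux) (use key in auto)
    show ?thesis
      unfolding e1 e2 e3 f4 f6 f5 N_def[symmetric] using Suc main by simp
  next
    case False
    show ?thesis
    proof (cases "i \<le> l + 2")
      case True
      have "i = l + 1 \<or> i = l + 2" using True False by auto
      thus ?thesis
      proof
        assume i: "i = l + 1"
        have e1: "cK (l+2) (l+1) = fact (2*l+3) / (fact (l+1) * fact 1)"
        proof -
          have "l+2+(l+1) = 2*l+3" "l+2-(l+1) = 1" "l+1 \<le> l+2" by simp_all
          thus ?thesis unfolding cK_def by (simp only: if_True)
        qed
        have e2: "cK (l+1) l = fact (2*l+1) / (fact l * fact 1)"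
        proof -
          have "l+1+l = 2*l+1" "l+1-l = 1" "l \<le> l+1" by simp_all
          thus ?thesis unfolding cK_def by (simp only: if_True)
        qed
        have e3: "cK l (l+1) = 0" unfolding cK_def by simp
        have f1: "(fact (2*l+3) :: complex) = (2 * of_nat l + 3) * (2 * (of_nat l + 1)) * fact (2*l+1)"
        proof -
          have "2*l+3 = Suc (Suc (2*l+1))" by simp
          hence "(fact (2*l+3) :: complex) = of_nat (Suc (Suc (2*l+1))) * (of_nat (Suc (2*l+1)) * fact (2*l+1))"
            by (simp only: fact_Suc)
          thus ?thesis by (simp add: algebra_simps)
        qed
        have f2: "(fact (l+1) :: complex) = (of_nat l + 1) * fact l" by (simp add: fact_Suc)
        have "(2 * of_nat l + 3) * (2 * (of_nat l + 1)) * fact (2*l+1) / ((of_nat l + 1) * fact l * fact 1)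
           = 0 + (2 * of_nat l + 3) * (2 * (fact (2*l+1) / (fact l * fact 1)) :: complex)"
          by (rule cK_aux2) simp_all
        moreover have h1: "(l+1 = 0) = False" "l+1-1 = l" by simp_all
        ultimately show ?thesis unfolding i h1 if_False e1 e2 e3 f1 f2 by (simp only:)
      next
        assume i: "i = l + 2"
        have e1: "cK (l+2) (l+2) = fact (2*l+4) / (fact (l+2) * fact 0)"
        proof -
          have "l+2+(l+2) = 2*l+4" "l+2-(l+2) = 0" "l+2 \<le> l+2" by simp_all
          thus ?thesis unfolding cK_def by (simp only: if_True)
        qed
        have e2: "cK (l+1) (l+1) = fact (2*l+2) / (fact (l+1) * fact 0)"
        proof -
          have "l+1+(l+1) = 2*l+2" "l+1-(l+1) = 0" "l+1 \<le> l+1" by simp_all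
          thus ?thesis unfolding cK_def by (simp only: if_True)
        qed
        have e3: "cK l (l+2) = 0" unfolding cK_def by simp
        have f1: "(fact (2*l+4) :: complex) = (2 * of_nat l + 3) * (2 * (of_nat l + 2)) * fact (2*l+2)"
        proof -
          have "2*l+4 = Suc (Suc (2*l+2))" by simp
          hence "(fact (2*l+4) :: complex) = of_nat (Suc (Suc (2*l+2))) * (of_nat (Suc (2*l+2)) * fact (2*l+2))"
            by (simp only: fact_Suc)
          thus ?thesis by (simp add: algebra_simps)
        qed
        have f2: "(fact (l+2) :: complex) = (of_nat l + 2) * fact (l+1)"
        proof -
          have "l+2 = Suc (l+1)" by simp
          hence "(fact (l+2) :: complex) = of_nat (Suc (l+1)) * fact (l+1)" by (simp only: fact_Suc)
          thus ?thesis by simp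
        qed
        have "(2 * of_nat l + 3) * (2 * (of_nat l + 2)) * fact (2*l+2) / ((of_nat l + 2) * fact (l+1) * fact 0)
           = 0 + (2 * of_nat l + 3) * (2 * (fact (2*l+2) / (fact (l+1) * fact 0)) :: complex)"
          by (rule cK_aux2) simp_all
        moreover have h1: "(l+2 = 0) = False" "l+2-1 = l+1" by simp_all
        ultimately show ?thesis unfolding i h1 if_False e1 e2 e3 f1 f2 by (simp only:)
      qed
    next
      case False
      thus ?thesis unfolding cK_def using Suc by auto
    qed
  qed
qed


lemma cK_zero: "l < i \<Longrightarrow> cK l i = 0" by (simp add: cK_def)

lemma Sp_ext: "l \<le> n \<Longrightarrow> Sp l u = (\<Sum>i\<le>n. cK l i * u^i)"
  unfolding Sp_def by (rule sum.mono_neutral_left) (auto simp: cK_zero)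

lemma Sp_rec: "Sp (l+2) u = Sp l u + (2 * of_nat l + 3) * 2 * u * Sp (l+1) u"
proof -
  have "Sp (l+2) u = (\<Sum>i\<le>l+2. (cK l i + (2 * of_nat l + 3) * (if i = 0 then 0 else 2 * cK (l+1) (i-1))) * u^i)"
    unfolding Sp_def cK_rec ..
  also have "\<dots> = (\<Sum>i\<le>l+2. cK l i * u^i) + (2 * of_nat l + 3) * (\<Sum>i\<le>Suc (l+1). (if i = 0 then 0 else 2 * cK (l+1) (i-1)) * u^i)"
    by (simp add: algebra_simps sum.distrib sum_distrib_left)
  also have "(\<Sum>i\<le>l+2. cK l i * u^i) = Sp l u" by (rule Sp_ext[symmetric]) simp
  also have "(\<Sum>i\<le>Suc (l+1). (if i = 0 then 0 else 2 * cK (l+1) (i-1)) * u^i) = 2 * u * Sp (l+1) u"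
    unfolding sum.atMost_Suc_shift Sp_def by (simp add: sum_distrib_left algebra_simps)
  finally show ?thesis by (simp add: algebra_simps)
qed

lemma Kc_Sp: "z \<noteq> 0 \<Longrightarrow> Kc l z = 2^l * of_real (sqrt pi) * exp (-z) / z^(l+1) * Sp l (1/(2*z))"
  unfolding Kc_def Sp_def by (simp add: sum_distrib_left field_simps power_add power_mult_distrib)

lemma Kc_rec:
  assumes z: "z \<noteq> 0"
  shows "Kc (l+2) z = (Kc l z + (of_nat (l+1) + 1/2) * Kc (l+1) z) / (z/2)^2"
proof -
  define A where "A = of_real (sqrt pi) * exp (-z)"
  define u where "u = 1/(2*z)"
  define S0 where "S0 = Sp l u"
  define S1 where "S1 = Sp (l+1) u"
  have S2: "Sp (l+2) u = S0 + (2 * of_nat l + 3) * 2 * u * S1" unfolding S0_def S1_def by (rule Sp_rec)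
  have e1: "Kc (l+2) z = 2^(l+2) * A / z^(l+3) * (S0 + (2 * of_nat l + 3) * 2 * u * S1)"
    using Kc_Sp[OF z, of "l+2"] S2 by (simp add: A_def u_def mult.assoc power_add numeral_3_eq_3)
  have e2: "Kc l z = 2^l * A / z^(l+1) * S0" using Kc_Sp[OF z, of l] by (simp add: A_def u_def S0_def mult.assoc)
  have e3: "Kc (l+1) z = 2^(l+1) * A / z^(l+2) * S1" using Kc_Sp[OF z, of "l+1"] by (simp add: A_def u_def S1_def mult.assoc)
  show ?thesis unfolding e1 e2 e3 u_def using z by (simp add: field_simps power_add power2_eq_square power3_eq_cube)
qed


lemma sqrtpi_sq: "(of_real (sqrt pi) :: complex) * of_real (sqrt pi) = of_real pi"
  by (simp flip: of_real_mult)

lemma gg_minus_half: "z \<noteq> 0 \<Longrightarrow> gg (-(1/2)) z = - (z/2) * gg (1/2) z"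
proof -
  assume z: "z \<noteq> 0"
  have a: "(z/2) powr (-2*(-(1/2))) = z/2" by simp
  have b: "(z/2) powr (-2*(1/2)) = 2/z"
  proof -
    have "(z/2) powr (-2*(1/2)) = (z/2) powr (-1)" by simp
    also have "\<dots> = inverse (z/2)" by (simp add: powr_minus)
    finally show ?thesis by simp
  qed
  show ?thesis unfolding gg_def a b using z by (simp add: field_simps)
qed

lemma gg_closed: "z \<noteq> 0 \<Longrightarrow> gg (of_nat l + 1/2) z = (-1)^l * (2 / of_real pi) * Kc l z"
proof -
  assume z: "z \<noteq> 0"
  define s where "s = (of_real (sqrt pi) :: complex)"
  have s0: "s \<noteq> 0" by (simp add: s_def)
  have pis: "(of_real pi :: complex) = s * s" unfolding s_def by (rule sqrtpi_sq[symmetric])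
  have P0: "gg (of_nat 0 + 1/2) z = (-1)^0 * (2 / of_real pi) * Kc 0 z"
    using gg_half[OF z] z s0 unfolding Kc_def cK_def pis s_def[symmetric] by (simp add: field_simps)
  have P1: "gg (of_nat 1 + 1/2) z = (-1)^1 * (2 / of_real pi) * Kc 1 z"
  proof -
    have "gg (1/2 + 1) z = (gg (1/2 - 1) z - 1/2 * gg (1/2) z) / (z/2)^2" by (rule gg_rec[OF z])
    moreover have "(1/2 - 1 :: complex) = -(1/2)" by simp
    ultimately have "gg (of_nat 1 + 1/2) z = (- (z/2) * gg (1/2) z - 1/2 * gg (1/2) z) / (z/2)^2"
      using gg_minus_half[OF z] by (simp add: add.commute)
    also have "\<dots> = (-1)^1 * (2 / of_real pi) * Kc 1 z"
      unfolding gg_half[OF z] Kc_def cK_def pis s_def[symmetric] using z s0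
      by (simp add: field_simps power2_eq_square power3_eq_cube)
    finally show ?thesis .
  qed
  have "gg (of_nat l + 1/2) z = (-1)^l * (2 / of_real pi) * Kc l z \<and>
        gg (of_nat (Suc l) + 1/2) z = (-1)^(Suc l) * (2 / of_real pi) * Kc (Suc l) z"
  proof (induction l)
    case 0 then show ?case using P0 P1 by simp
  next
    case (Suc l)
    have e1: "(of_nat (Suc l) + 1/2) + 1 = (of_nat (Suc (Suc l)) + 1/2 :: complex)" by simp
    have e2: "(of_nat (Suc l) + 1/2) - 1 = (of_nat l + 1/2 :: complex)" by simp
    have "gg (of_nat (Suc (Suc l)) + 1/2) z = (gg (of_nat l + 1/2) z - (of_nat (Suc l) + 1/2) * gg (of_nat (Suc l) + 1/2) z) / (z/2)^2"
      using gg_rec[OF z, of "of_nat (Suc l) + 1/2"] unfolding e1 e2 .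
    also have "\<dots> = (-1)^(Suc (Suc l)) * (2 / of_real pi) * ((Kc l z + (of_nat (l+1) + 1/2) * Kc (l+1) z) / (z/2)^2)"
      unfolding Suc.IH[THEN conjunct1] Suc.IH[THEN conjunct2] by (simp add: field_simps)
    also have "(Kc l z + (of_nat (l+1) + 1/2) * Kc (l+1) z) / (z/2)^2 = Kc (Suc (Suc l)) z"
      using Kc_rec[OF z, of l] by simp
    finally show ?case using Suc.IH by simp
  qed
  thus ?thesis by simp
qed

lemma sin_half_int: "sin ((of_nat l + 1/2) * of_real pi) = ((-1)^l :: complex)"
proof -
  have "(of_nat l + 1/2) * of_real pi = (of_real ((real l + 1/2) * pi) :: complex)" by simp
  moreover have "sin ((real l + 1/2) * pi) = (-1)^l"
    by (simp add: distrib_right sin_add)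
  ultimately show ?thesis by (simp only: sin_of_real) simp
qed

lemma tildeK_closed: "z \<noteq> 0 \<Longrightarrow> tildeK (of_nat l + 1/2) z = Kc l z"
proof -
  assume z: "z \<noteq> 0"
  have p: "(of_real pi :: complex) \<noteq> 0" by simp
  show ?thesis unfolding tildeK_gg[OF z] gg_closed[OF z] sin_half_int using p
    by (simp add: field_simps)
qed

definition I2 :: "complex \<Rightarrow> complex fps" where
  "I2 \<nu> = Abs_fps (\<lambda>n. if even n then rGamma (of_nat (n div 2) + \<nu> + 1) / (4^(n div 2) * fact (n div 2)) else 0)"

lemma I2_sums: "(\<lambda>n. I2 \<nu> $ n * u^n) sums tildeI \<nu> u"
proof -
  have "(\<lambda>m. (\<lambda>n. I2 \<nu> $ n * u^n) (2*m)) sums tildeI \<nu> u"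
  proof -
    have "(\<lambda>n. I2 \<nu> $ n * u^n) (2*m) = (u/2)^(2*m) * rGamma (of_nat m + \<nu> + 1) / fact m" for m
      by (simp add: I2_def power_divide power_mult four_pow field_simps)
    thus ?thesis using tI_sums[of u \<nu>] by simp
  qed
  moreover have "strict_mono (\<lambda>m::nat. 2*m)" by (rule strict_monoI) simp
  ultimately show ?thesis
    by (subst (asm) sums_mono_reindex) (auto simp: I2_def elim!: oddE)
qed

lemma tI_fps: "tildeI \<nu> has_fps_expansion I2 \<nu>"
  by (rule has_fps_expansionI) (use I2_sums in auto)

lemma ode_aux: "(k::complex) \<noteq> 0 \<Longrightarrow> P \<noteq> 0 \<Longrightarrow> F \<noteq> 0 \<Longrightarrow>
  (2*k - 1)*((2*k)*(R/((4*P)*(k*F)))) + (2*\<nu>+1)*((2*k)*(R/((4*P)*(k*F)))) - ((k+\<nu>)*R)/(P*F) = 0"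
  by (simp add: field_simps)

lemma I2_ode: "fps_X * fps_deriv (fps_deriv (I2 \<nu>)) + fps_const (2*\<nu>+1) * fps_deriv (I2 \<nu>) - fps_X * I2 \<nu> = 0"
proof (rule fps_ext)
  fix n
  show "(fps_X * fps_deriv (fps_deriv (I2 \<nu>)) + fps_const (2*\<nu>+1) * fps_deriv (I2 \<nu>) - fps_X * I2 \<nu>) $ n = 0 $ n"
  proof (cases n)
    case 0
    then show ?thesis by (simp add: I2_def)
  next
    case (Suc k)
    show ?thesis
    proof (cases "even k")
      case False
      then show ?thesis using Suc by (simp add: I2_def)
    next
      case True
      then obtain m where k: "k = 2*m" by (metis evenE)
      have r: "rGamma (of_nat m + \<nu> + 1) = (of_nat m + \<nu> + 1) * rGamma (of_nat (Suc m) + \<nu> + 1)"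
        using rGamma_step[of "of_nat m + \<nu> + 1"] by (simp add: add_ac)
      have d1: "(2*m+2) div 2 = Suc m" "(2*m) div 2 = m" "Suc (Suc (2*m)) div 2 = Suc m" by simp_all
      have "(of_nat (2*m+1) * (of_nat (2*m+2) * (rGamma (of_nat (Suc m) + \<nu> + 1) / (4^(Suc m) * fact (Suc m)))))
          + (2*\<nu>+1) * (of_nat (2*m+2) * (rGamma (of_nat (Suc m) + \<nu> + 1) / (4^(Suc m) * fact (Suc m))))
          - rGamma (of_nat m + \<nu> + 1) / (4^m * fact m) = 0"
      proof -
        define k where "k = (of_nat m + 1 :: complex)"
        have k0: "k \<noteq> 0" unfolding k_def by simp
        have q: "(of_nat (2*m+1) :: complex) = 2*k - 1" "(of_nat (2*m+2) :: complex) = 2*k"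
          "(4::complex)^(Suc m) = 4*4^m" "(fact (Suc m) :: complex) = k * fact m"
          "of_nat m + \<nu> + 1 = k + \<nu>" "of_nat (Suc m) + \<nu> + 1 = k + \<nu> + 1"
          unfolding k_def by (simp_all add: fact_Suc algebra_simps)
        have rr: "rGamma (k + \<nu>) = (k + \<nu>) * rGamma (k + \<nu> + 1)" by (rule rGamma_step)
        show ?thesis unfolding q rr by (rule ode_aux[OF k0]) simp_all
      qed
      thus ?thesis using Suc k by (simp add: I2_def d1 algebra_simps)
    qed
  qed
qed


definition DD :: "complex \<Rightarrow> complex fps" where "DD \<nu> = fps_exp (-1) * I2 \<nu>"

lemma DD_ode: "fps_X * fps_deriv (fps_deriv (DD \<nu>)) + (2 * fps_X + fps_const (2*\<nu>+1)) * fps_deriv (DD \<nu>)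
   + fps_const (2*\<nu>+1) * DD \<nu> = 0"
proof -
  define E where "E = fps_exp (-1::complex)"
  define f where "f = I2 \<nu>"
  define c where "c = fps_const (2*\<nu>+1)"
  have dE: "fps_deriv E = - E" unfolding E_def by (simp add: fps_eq_iff)
  have ode: "fps_X * fps_deriv (fps_deriv f) = fps_X * f - c * fps_deriv f"
    using I2_ode[of \<nu>] unfolding f_def c_def by (simp add: algebra_simps)
  have "fps_X * fps_deriv (fps_deriv (E * f)) + (2 * fps_X + c) * fps_deriv (E * f) + c * (E * f)
      = E * (fps_X * fps_deriv (fps_deriv f)) - fps_X * E * f + c * E * fps_deriv f"
    by (simp add: dE algebra_simps)
  also have "\<dots> = 0" unfolding ode by (simp add: algebra_simps)
  finally show ?thesis unfolding DD_def E_def f_def c_def .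
qed

lemma DD_rec: "(of_nat k + 1) * (of_nat k + 2*\<nu> + 1) * DD \<nu> $ Suc k + (2 * of_nat k + 2*\<nu>+1) * DD \<nu> $ k = 0"
proof -
  have "(fps_X * fps_deriv (fps_deriv (DD \<nu>)) + (2 * fps_X + fps_const (2*\<nu>+1)) * fps_deriv (DD \<nu>)
   + fps_const (2*\<nu>+1) * DD \<nu>) $ k = 0" unfolding DD_ode by simp
  moreover have "(fps_X * fps_deriv (fps_deriv (DD \<nu>))) $ k = of_nat k * (of_nat k + 1) * DD \<nu> $ Suc k"
    by (cases k) (simp_all add: algebra_simps)
  moreover have "(2 * fps_X * fps_deriv (DD \<nu>)) $ k = 2 * of_nat k * DD \<nu> $ k"
  proof -
    have "(2 * fps_X * fps_deriv (DD \<nu>)) = fps_const 2 * (fps_X * fps_deriv (DD \<nu>))"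
      by (simp add: mult.assoc numeral_fps_const)
    moreover have "(fps_X * fps_deriv (DD \<nu>)) $ k = of_nat k * DD \<nu> $ k"
      by (cases k) (simp_all add: algebra_simps)
    ultimately show ?thesis by (simp only: fps_mult_left_const_nth) simp
  qed
  ultimately show ?thesis by (simp add: algebra_simps distrib_right)
qed

lemma lin_aux: "(A::complex) \<noteq> 0 \<Longrightarrow> A * x + B = 0 \<Longrightarrow> x = - B / A"
  by (simp add: field_simps eq_neg_iff_add_eq_0)

lemma dd_aux: "(K1::complex) \<noteq> 0 \<Longrightarrow> KK \<noteq> 0 \<Longrightarrow> Pc \<noteq> 0 \<Longrightarrow> F \<noteq> 0 \<Longrightarrow>
  -((2*h)*(GG*T*Pa/(Pc*F)))/(K1*KK) = GG*((-2)*T)*(Pa*h)/((Pc*KK)*(K1*F))"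
  by (simp add: field_simps)

lemma DD_closed:
  assumes nz: "\<And>k. of_nat k + 2*\<nu> + 1 \<noteq> 0"
  shows "DD \<nu> $ k = rGamma (\<nu> + 1) * (-2)^k * pochhammer (\<nu> + 1/2) k / (pochhammer (2*\<nu>+1) k * fact k)"
proof (induction k)
  case 0
  then show ?case by (simp add: DD_def I2_def)
next
  case (Suc k)
  have pn: "pochhammer (2*\<nu>+1) k \<noteq> 0"
  proof
    assume "pochhammer (2*\<nu>+1) k = 0"
    then obtain j where "2*\<nu>+1 = - of_nat j" by (auto simp: pochhammer_eq_0_iff)
    hence "of_nat j + 2*\<nu> + 1 = 0" by (metis add.commute add.left_commute neg_eq_iff_add_eq_0 add.assoc)
    with nz show False by blast
  qed
  have k1: "(of_nat k + 1 :: complex) \<noteq> 0" by simp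
  have A0: "(of_nat k + 1) * (of_nat k + 2*\<nu> + 1) \<noteq> 0" using nz[of k] k1 by simp
  have "DD \<nu> $ Suc k = - ((2 * of_nat k + 2*\<nu>+1) * DD \<nu> $ k) / ((of_nat k + 1) * (of_nat k + 2*\<nu> + 1))"
    by (rule lin_aux[OF A0 DD_rec])
  also have "\<dots> = rGamma (\<nu> + 1) * (-2)^Suc k * pochhammer (\<nu> + 1/2) (Suc k) / (pochhammer (2*\<nu>+1) (Suc k) * fact (Suc k))"
  proof -
    have q: "2 * of_nat k + 2*\<nu> + 1 = 2*(\<nu>+1/2+ of_nat k)" "of_nat k + 2*\<nu> + 1 = 2*\<nu>+1+ of_nat k"
      "(-2::complex)^Suc k = (-2)*(-2)^k"
      "pochhammer (\<nu>+1/2) (Suc k) = pochhammer (\<nu>+1/2) k * (\<nu>+1/2+ of_nat k)"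
      "pochhammer (2*\<nu>+1) (Suc k) = pochhammer (2*\<nu>+1) k * (2*\<nu>+1+ of_nat k)"
      "(fact (Suc k) :: complex) = (of_nat k + 1) * fact k"
      by (simp_all add: pochhammer_Suc fact_Suc algebra_simps)
    have kc: "2*\<nu>+1+ of_nat k \<noteq> 0" using nz[of k] by (simp add: algebra_simps)
    show ?thesis unfolding Suc.IH q by (rule dd_aux[OF k1 kc pn]) simp
  qed
  finally show ?case .
qed

definition Bn :: "complex \<Rightarrow> complex fps" where
  "Bn c = fps_compose (fps_binomial (-c)) (-fps_X)"

lemma Bn_nth: "Bn c $ n = pochhammer c n / fact n"
  unfolding Bn_def fps_compose_uminus' by (simp add: gbinomial_pochhammer)

lemma Bn_add: "Bn c * Bn d = Bn (c + d)"
proof -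
  have "Bn (c+d) = fps_compose (fps_binomial (-c) * fps_binomial (-d)) (-fps_X)"
    unfolding Bn_def fps_binomial_add_mult[symmetric] by simp
  also have "\<dots> = Bn c * Bn d" unfolding Bn_def by (rule fps_compose_mult_distrib) simp
  finally show ?thesis by simp
qed

lemma Bn_0: "Bn 0 = 1"
  by (rule fps_ext) (simp add: Bn_nth pochhammer_0_left)

lemma Bn_1: "Bn 1 = inverse (1 - fps_X)"
proof -
  have "Bn 1 = Abs_fps (\<lambda>n. 1::complex)"
    by (rule fps_ext) (simp add: Bn_nth pochhammer_fact[symmetric])
  also have "\<dots> = inverse (inverse (Abs_fps (\<lambda>n. 1::complex)))" by simp
  also have "\<dots> = inverse (1 - fps_X)" by (simp only: fps_inverse_gp')
  finally show ?thesis .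
qed

definition YY :: "complex \<Rightarrow> complex fps" where
  "YY x = fps_const (x/2) * fps_X * Bn 1"

lemma YY_fps: "(\<lambda>t. t * x / (2 * (1 - t))) has_fps_expansion YY x"
proof -
  have "(\<lambda>t. x/2 * (t * inverse (1 - t))) has_fps_expansion fps_const (x/2) * (fps_X * inverse (1 - fps_X))"
    by (rule has_fps_expansion_cmult_left[OF has_fps_expansion_mult[OF has_fps_expansion_fps_X
          has_fps_expansion_inverse[OF has_fps_expansion_diff[OF has_fps_expansion_1 has_fps_expansion_fps_X]]]]) simp
  moreover have "(\<lambda>t. x/2 * (t * inverse (1 - t))) = (\<lambda>t. t * x / (2 * (1 - t)))"
  proof
    fix t :: complex
    show "x/2 * (t * inverse (1 - t)) = t * x / (2 * (1 - t))"
      by (cases "t = 1") (simp_all add: field_simps)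
  qed
  moreover have "YY x = fps_const (x/2) * (fps_X * inverse (1 - fps_X))"
    unfolding YY_def Bn_1 by (simp only: mult.assoc)
  ultimately show ?thesis by (simp only:)
qed

lemma YY_0: "YY x $ 0 = 0" by (simp add: YY_def mult.assoc)

lemma YY_pow: "YY x ^ k = fps_const ((x/2)^k) * fps_X^k * Bn (of_nat k)"
proof (induction k)
  case 0 then show ?case by (simp add: Bn_0)
next
  case (Suc k)
  have "YY x ^ Suc k = (fps_const ((x/2)^k) * fps_X^k * Bn (of_nat k)) * (fps_const (x/2) * fps_X * Bn 1)"
    unfolding power_Suc2 Suc.IH by (simp only: YY_def)
  also have "\<dots> = fps_const ((x/2)^k * (x/2)) * (fps_X^k * fps_X) * (Bn (of_nat k) * Bn 1)"
    by (simp add: algebra_simps fps_const_mult[symmetric])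
  also have "\<dots> = fps_const ((x/2)^Suc k) * fps_X^Suc k * Bn (of_nat (Suc k))"
    by (simp add: Bn_add power_Suc2 mult.commute)
  finally show ?case .
qed

lemma Pf_fps: "(\<lambda>t. (1 - t) powr (-a) * (exp (- (t * x / (2 * (1 - t)))) * tildeI \<nu> (t * x / (2 * (1 - t)))))
   has_fps_expansion Bn a * (DD \<nu> oo YY x)"
proof -
  have b: "((\<lambda>u. (1 + u) powr (-a)) \<circ> (\<lambda>t. - t)) has_fps_expansion Bn a"
    unfolding Bn_def by (rule has_fps_expansion_compose[OF has_fps_expansion_binomial_complex
        has_fps_expansion_minus[OF has_fps_expansion_fps_X]]) simp
  have e: "((\<lambda>u. exp (- u)) \<circ> (\<lambda>t. t * x / (2 * (1 - t)))) has_fps_expansion (fps_exp (-1) oo YY x)"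
    by (rule has_fps_expansion_compose[OF has_fps_expansion_exp_neg1 YY_fps YY_0])
  have i: "(tildeI \<nu> \<circ> (\<lambda>t. t * x / (2 * (1 - t)))) has_fps_expansion (I2 \<nu> oo YY x)"
    by (rule has_fps_expansion_compose[OF tI_fps YY_fps YY_0])
  have "(\<lambda>t. ((\<lambda>u. (1 + u) powr (-a)) \<circ> (\<lambda>t. - t)) t * (((\<lambda>u. exp (- u)) \<circ> (\<lambda>t. t * x / (2 * (1 - t)))) t
      * (tildeI \<nu> \<circ> (\<lambda>t. t * x / (2 * (1 - t)))) t))
      has_fps_expansion Bn a * ((fps_exp (-1) oo YY x) * (I2 \<nu> oo YY x))"
    by (rule has_fps_expansion_mult[OF b has_fps_expansion_mult[OF e i]])
  moreover have "(fps_exp (-1) oo YY x) * (I2 \<nu> oo YY x) = DD \<nu> oo YY x"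
    unfolding DD_def by (rule fps_compose_mult_distrib[symmetric]) (rule YY_0)
  ultimately show ?thesis by (simp add: o_def)
qed

lemma YYpow_nth: "(YY x ^ k) $ m = (if m < k then 0 else (x/2)^k * Bn (of_nat k) $ (m - k))"
proof -
  have "YY x ^ k = fps_const ((x/2)^k) * (fps_X^k * Bn (of_nat k))" by (simp only: YY_pow mult.assoc)
  thus ?thesis by (simp only: fps_mult_left_const_nth fps_X_power_mult_nth) simp
qed

lemma compose_trunc:
  assumes "m \<le> n"
  shows "(D oo YY x) $ m = (\<Sum>k\<le>n. fps_const (D $ k) * YY x ^ k) $ m"
proof -
  have "(\<Sum>k\<le>n. fps_const (D $ k) * YY x ^ k) $ m = (\<Sum>k\<le>n. D $ k * (YY x ^ k) $ m)"
    by (simp add: fps_sum_nth)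
  also have "\<dots> = (\<Sum>k\<in>{0..m}. D $ k * (YY x ^ k) $ m)"
    by (rule sum.mono_neutral_right) (use assms in \<open>auto simp: YYpow_nth\<close>)
  also have "\<dots> = (D oo YY x) $ m" by (simp add: fps_compose_nth)
  finally show ?thesis by simp
qed

lemma coef1: "(Bn a * (D oo YY x)) $ n = (\<Sum>k\<le>n. D $ k * (x/2)^k * Bn (a + of_nat k) $ (n - k))"
proof -
  define T where "T = (\<Sum>k\<le>n. fps_const (D $ k) * YY x ^ k)"
  have "(Bn a * (D oo YY x)) $ n = (Bn a * T) $ n"
    unfolding fps_mult_nth T_def by (intro sum.cong refl) (simp add: compose_trunc)
  also have "Bn a * T = (\<Sum>k\<le>n. fps_const (D $ k * (x/2)^k) * (fps_X^k * Bn (a + of_nat k)))"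
  proof -
    have "Bn a * T = (\<Sum>k\<le>n. fps_const (D $ k) * (Bn a * YY x ^ k))"
      unfolding T_def sum_distrib_left by (intro sum.cong refl) (rule mult.left_commute)
    also have "\<dots> = (\<Sum>k\<le>n. fps_const (D $ k * (x/2)^k) * (fps_X^k * Bn (a + of_nat k)))"
    proof (intro sum.cong refl)
      fix k
      have "Bn a * YY x ^ k = fps_const ((x/2)^k) * (fps_X^k * (Bn a * Bn (of_nat k)))"
        unfolding YY_pow by (simp only: mult_ac)
      thus "fps_const (D $ k) * (Bn a * YY x ^ k) = fps_const (D $ k * (x/2)^k) * (fps_X^k * Bn (a + of_nat k))"
        by (simp only: Bn_add fps_const_mult[symmetric] mult.assoc)
    qed
    finally show ?thesis .
  qed
  also have "(\<Sum>k\<le>n. fps_const (D $ k * (x/2)^k) * (fps_X^k * Bn (a + of_nat k))) $ n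
     = (\<Sum>k\<le>n. D $ k * (x/2)^k * Bn (a + of_nat k) $ (n - k))"
    by (simp only: fps_sum_nth fps_mult_left_const_nth fps_X_power_mult_nth) (intro sum.cong refl, simp)
  finally show ?thesis .
qed


lemma mu_nz:
  fixes \<mu> :: complex
  assumes "\<forall>n::nat. \<mu> \<noteq> - of_nat (Suc n)"
  shows "of_nat k + \<mu> + 1 \<noteq> 0" "pochhammer (\<mu>+1) k \<noteq> 0"
proof -
  show a: "of_nat k + \<mu> + 1 \<noteq> 0"
  proof
    assume "of_nat k + \<mu> + 1 = 0"
    hence "\<mu> + (1 + of_nat k) = 0" by (simp add: algebra_simps)
    hence "\<mu> = - (1 + of_nat k)" by (rule eq_neg_iff_add_eq_0[THEN iffD2])
    hence "\<mu> = - of_nat (Suc k)" by simp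
    with assms show False by blast
  qed
  show "pochhammer (\<mu>+1) k \<noteq> 0"
  proof
    assume "pochhammer (\<mu>+1) k = 0"
    then obtain j where "\<mu>+1 = - of_nat j" by (auto simp: pochhammer_eq_0_iff)
    hence "(\<mu>+1) + of_nat j = 0" by (rule eq_neg_iff_add_eq_0[THEN iffD1])
    hence "\<mu> + (1 + of_nat j) = 0" by (simp only: add.assoc)
    hence "\<mu> = - (1 + of_nat j)" by (rule eq_neg_iff_add_eq_0[THEN iffD2])
    hence "\<mu> = - of_nat (Suc j)" by simp
    with assms show False by blast
  qed
qed

lemma pc_aux: "S * W = Sg * (X::complex) \<Longrightarrow> Pk \<noteq> 0 \<Longrightarrow> Q \<noteq> 0 \<Longrightarrow> fk \<noteq> 0 \<Longrightarrow> fnk \<noteq> 0 \<Longrightarrow>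
   R * S * Pa / (Pk * fk) * W * (Pak / fnk) = R * Pa * Pak / (Pk * Q) * (Sg / fk) * (Q / fnk) * X"
  by (simp add: field_simps)

lemma Pcoef:
  fixes \<mu> :: complex
  assumes mu: "\<forall>n::nat. \<mu> \<noteq> - of_nat (Suc n)"
  shows "(Bn ((\<mu>+1)/2) * (DD (\<mu>/2) oo YY x)) $ n
     = rGamma (\<mu>/2+1) * pochhammer ((\<mu>+1)/2) n / pochhammer (\<mu>+1) n * laguerre n \<mu> x"
proof -
  define a where "a = (\<mu>+1)/2"
  have nz: "\<And>k. of_nat k + 2*(\<mu>/2) + 1 \<noteq> 0" using mu_nz(1)[OF mu] by simp
  have DDc: "DD (\<mu>/2) $ k = rGamma (\<mu>/2+1) * (-2)^k * pochhammer a k / (pochhammer (\<mu>+1) k * fact k)" for k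
    using DD_closed[OF nz, of k] by (simp add: a_def add_divide_distrib)
  have "(Bn a * (DD (\<mu>/2) oo YY x)) $ n = (\<Sum>k\<le>n. DD (\<mu>/2) $ k * (x/2)^k * Bn (a + of_nat k) $ (n - k))"
    by (rule coef1)
  also have "\<dots> = (\<Sum>k\<le>n. rGamma (\<mu>/2+1) * pochhammer a n / pochhammer (\<mu>+1) n *
        ((-1)^k / fact k * ((of_nat n + \<mu>) gchoose (n - k)) * x^k))"
  proof (intro sum.cong refl)
    fix k assume "k \<in> {..n}"
    hence kn: "k \<le> n" by simp
    have p1: "pochhammer a n = pochhammer a k * pochhammer (a + of_nat k) (n - k)"
      using pochhammer_product'[of a k "n-k"] kn by simp
    have g1: "(of_nat n + \<mu>) gchoose (n - k) = pochhammer (\<mu> + 1 + of_nat k) (n - k) / fact (n - k)"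
      unfolding gbinomial_pochhammer' using kn by (simp add: of_nat_diff algebra_simps)
    have p2: "pochhammer (\<mu>+1) n = pochhammer (\<mu>+1) k * pochhammer (\<mu> + 1 + of_nat k) (n - k)"
      using pochhammer_product'[of "\<mu>+1" k "n-k"] kn by simp
    have q0: "pochhammer (\<mu> + 1 + of_nat k) (n - k) \<noteq> 0" using mu_nz(2)[OF mu, of n] p2 by auto
    have sw: "(-2)^k * (x/2)^k = (-1)^k * x^k" by (simp add: power_mult_distrib[symmetric])
    show "DD (\<mu>/2) $ k * (x/2)^k * Bn (a + of_nat k) $ (n - k) = rGamma (\<mu>/2+1) * pochhammer a n / pochhammer (\<mu>+1) n *
        ((-1)^k / fact k * ((of_nat n + \<mu>) gchoose (n - k)) * x^k)"
      unfolding DDc Bn_nth p1 g1 p2 mult.assoc[symmetric]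
      by (rule pc_aux[OF sw mu_nz(2)[OF mu] q0 fact_nonzero fact_nonzero])
  qed
  also have "\<dots> = rGamma (\<mu>/2+1) * pochhammer a n / pochhammer (\<mu>+1) n * laguerre n \<mu> x"
    unfolding laguerre_def sum_distrib_left ..
  finally show ?thesis unfolding a_def .
qed

lemma pow_aux:
  fixes x u :: complex
  assumes u: "u \<noteq> 0" and x: "x \<noteq> 0" and i: "i \<le> l"
  shows "(x/2)^(2*l+1) / u^(l+1) / (x / (2*u))^(l+1+i) = (x/2)^(l-i) * u^i"
proof -
  have "l - i + (l + 1 + i) = 2*l+1" using i by simp
  hence e1: "(x/2)^(2*l+1) = (x/2)^(l-i) * (x/2)^(l+1+i)" by (simp only: power_add[symmetric])
  have e2: "(x / (2*u))^(l+1+i) = (x/2)^(l+1+i) / u^(l+1+i)"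
    by (simp add: power_divide power_mult_distrib field_simps)
  have e3: "u^(l+1+i) = u^(l+1) * u^i" by (simp add: power_add)
  have n1: "(x/2)^(l+1+i) \<noteq> 0" "u^(l+1) \<noteq> 0" "u^i \<noteq> 0" using x u by simp_all
  show ?thesis unfolding e1 e2 e3 using n1 by (simp add: field_simps)
qed

lemma ex_aux: "(u::complex) \<noteq> 0 \<Longrightarrow> x/2 + -(x/(2*u)) = -((1-u)*x/(2*u))"
  by (simp add: field_simps)

lemma s2_aux: "A / B * C * E1 * TI * (D * s * E2 * (\<Sum>i\<le>l. c i / (p i * q i)))
   = A * (E1 * E2) * TI * (\<Sum>i\<le>l. D * s * c i / p i * (C / B / q i :: complex))"
  unfolding sum_distrib_left by (intro sum.cong refl) (simp only: divide_inverse inverse_mult_distrib mult_ac)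

lemma G_eq:
  fixes \<mu> x t :: complex
  assumes x: "x \<noteq> 0" and t: "t \<noteq> 1"
  shows "G \<mu> l t x = (\<Sum>i\<le>l. (2^l * of_real (sqrt pi) * cK l i / 2^i * (x/2)^(l-i)) * (1-t)^i)
     * ((1 - t) powr (-((\<mu>+1)/2)) * (exp (- (t*x/(2*(1-t)))) * tildeI (\<mu>/2) (t*x/(2*(1-t)))))"
proof -
  define u where "u = 1 - t"
  have u: "u \<noteq> 0" using t by (simp add: u_def)
  define z where "z = x / (2*(1-t))"
  have z: "z \<noteq> 0" using x u by (simp add: z_def u_def)
  define y where "y = t*x/(2*(1-t))"
  have zu: "z = x/(2*u)" by (simp add: z_def u_def)
  have yu: "y = (1-u)*x/(2*u)" by (simp add: y_def u_def)
  define TI where "TI = tildeI (\<mu>/2) y"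
  define s where "s = (of_real (sqrt pi) :: complex)"
  define P where "P = u powr (-((\<mu>+1)/2))"
  have pw: "u powr (of_nat l + (\<mu>+3)/2) = u powr ((\<mu>+1)/2) * u^(l+1)"
  proof -
    have a: "of_nat l + (\<mu>+3)/2 = (\<mu>+1)/2 + of_nat (l+1)" by (simp add: field_simps)
    have "u powr (of_nat l + (\<mu>+3)/2) = u powr ((\<mu>+1)/2 + of_nat (l+1))" by (simp only: a)
    also have "\<dots> = u powr ((\<mu>+1)/2) * u powr (of_nat (l+1))" by (rule powr_add)
    also have "u powr (of_nat (l+1)) = u^(l+1)" using powr_nat'[of u "l+1"] u by blast
    finally show ?thesis .
  qed
  have pw2: "1 / (u powr (of_nat l + (\<mu>+3)/2)) = P / u^(l+1)"
    unfolding pw P_def powr_minus by (simp only: divide_inverse inverse_mult_distrib mult_1_left)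
  have ex: "exp (x/2) * exp (-z) = exp (-y)"
  proof -
    have "x/2 + -z = -y" unfolding zu yu by (rule ex_aux[OF u])
    thus ?thesis by (simp flip: exp_add)
  qed
  have "G \<mu> l t x = P / u^(l+1) * (x/2)^(2*l+1) * exp (x/2) * TI * Kc l z"
  proof -
    have yt: "t*x/(2*u) = y" by (simp add: y_def u_def)
    show ?thesis
      unfolding G_def u_def[symmetric] pw2 zu[symmetric] tildeK_closed[OF z] yt TI_def[symmetric] ..
  qed
  also have "\<dots> = P * (exp (x/2) * exp (-z)) * TI * (\<Sum>i\<le>l. 2^l * s * cK l i / 2^i * ((x/2)^(2*l+1) / u^(l+1) / z^(l+1+i)))"
    unfolding Kc_def s_def[symmetric] by (rule s2_aux)
  also have "(\<Sum>i\<le>l. 2^l * s * cK l i / 2^i * ((x/2)^(2*l+1) / u^(l+1) / z^(l+1+i)))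
      = (\<Sum>i\<le>l. (2^l * s * cK l i / 2^i * (x/2)^(l-i)) * u^i)"
  proof (intro sum.cong refl)
    fix i assume "i \<in> {..l}"
    hence "i \<le> l" by simp
    thus "2^l * s * cK l i / 2^i * ((x/2)^(2*l+1) / u^(l+1) / z^(l+1+i)) = (2^l * s * cK l i / 2^i * (x/2)^(l-i)) * u^i"
      unfolding zu using pow_aux[OF u x \<open>i \<le> l\<close>] by (simp only: mult.assoc)
  qed
  finally show ?thesis unfolding ex P_def TI_def y_def s_def u_def by (simp only: mult_ac)
qed

lemma notin_aux:
  fixes \<mu> :: complex
  assumes mu: "\<forall>n::nat. \<mu> \<noteq> - of_nat (Suc n)"
  shows "(\<mu>+1)/2 \<notin> \<int>\<^sub>\<le>\<^sub>0" "\<mu>/2 + 1 \<notin> \<int>\<^sub>\<le>\<^sub>0" "of_nat k + \<mu> + 1 \<notin> \<int>\<^sub>\<le>\<^sub>0"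
proof -
  show "(\<mu>+1)/2 \<notin> \<int>\<^sub>\<le>\<^sub>0"
  proof
    assume "(\<mu>+1)/2 \<in> \<int>\<^sub>\<le>\<^sub>0"
    then obtain n where "(\<mu>+1)/2 = - of_nat n" by (rule nonpos_Ints_cases')
    hence h2: "1 + \<mu> = -(2 * of_nat n)" by (simp add: field_simps)
    have "\<mu> = (1 + \<mu>) - 1" by simp
    also have "\<dots> = -(2 * of_nat n) - 1" using h2 by simp
    also have "\<dots> = - of_nat (Suc (2*n))" by simp
    finally have "\<mu> = - of_nat (Suc (2*n))" .
    with mu show False by blast
  qed
  show "\<mu>/2 + 1 \<notin> \<int>\<^sub>\<le>\<^sub>0"
  proof
    assume "\<mu>/2 + 1 \<in> \<int>\<^sub>\<le>\<^sub>0"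
    then obtain n where "\<mu>/2 + 1 = - of_nat n" by (rule nonpos_Ints_cases')
    hence h2: "2 + \<mu> = -(2 * of_nat n)" by (simp add: field_simps)
    have "\<mu> = (2 + \<mu>) - 2" by simp
    also have "\<dots> = -(2 * of_nat n) - 2" using h2 by simp
    also have "\<dots> = - of_nat (Suc (2*n+1))" by simp
    finally have "\<mu> = - of_nat (Suc (2*n+1))" .
    with mu show False by blast
  qed
  show "of_nat k + \<mu> + 1 \<notin> \<int>\<^sub>\<le>\<^sub>0"
  proof
    assume "of_nat k + \<mu> + 1 \<in> \<int>\<^sub>\<le>\<^sub>0"
    then obtain n where "of_nat k + \<mu> + 1 = - of_nat n" by (rule nonpos_Ints_cases')
    have "\<mu> = (of_nat k + \<mu> + 1) - of_nat k - 1" by simp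
    also have "\<dots> = - of_nat n - of_nat k - 1" using \<open>of_nat k + \<mu> + 1 = - of_nat n\<close> by simp
    also have "\<dots> = - of_nat (Suc (n+k))" by simp
    finally have "\<mu> = - of_nat (Suc (n+k))" .
    with mu show False by blast
  qed
qed

lemma gamma_key:
  fixes \<mu> :: complex
  assumes mu: "\<forall>n::nat. \<mu> \<noteq> - of_nat (Suc n)"
  shows "of_real (sqrt pi) * rGamma (\<mu>/2+1) * pochhammer ((\<mu>+1)/2) n / (2 powr \<mu> * pochhammer (\<mu>+1) n)
       = Gamma (of_nat n + (\<mu>+1)/2) / Gamma (of_nat n + \<mu> + 1)"
proof -
  define a where "a = (\<mu>+1)/2"
  note nz = notin_aux[OF mu]
  have ah: "a + 1/2 = \<mu>/2 + 1" unfolding a_def by (simp add: field_simps)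
  have a0: "a \<notin> \<int>\<^sub>\<le>\<^sub>0" "a + 1/2 \<notin> \<int>\<^sub>\<le>\<^sub>0" using nz(1,2) unfolding ah unfolding a_def by simp_all
  have m0: "\<mu> + 1 \<notin> \<int>\<^sub>\<le>\<^sub>0" using nz(3)[of 0] by simp
  have dup: "Gamma a * Gamma (a + 1/2) = exp ((1 - 2*a) * of_real (ln 2)) * of_real (sqrt pi) * Gamma (2*a)"
    by (rule Gamma_legendre_duplication[OF a0])
  have e1: "a + 1/2 = \<mu>/2 + 1" "2*a = \<mu>+1" "1 - 2*a = -\<mu>" unfolding a_def by (simp_all add: field_simps)
  have e2: "exp (-\<mu> * of_real (ln 2)) = inverse (2 powr \<mu>)"
  proof -
    have "ln (2::complex) = of_real (ln 2)" using Ln_of_real[of 2] by simp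
    thus ?thesis by (simp add: powr_def exp_minus)
  qed
  have dup2: "Gamma a * Gamma (\<mu>/2+1) = inverse (2 powr \<mu>) * of_real (sqrt pi) * Gamma (\<mu>+1)"
    using dup unfolding e1(3) unfolding e1(1,2) e2 .
  have g1: "Gamma a \<noteq> 0" "Gamma (\<mu>/2+1) \<noteq> 0" "Gamma (\<mu>+1) \<noteq> 0"
    using a0 nz(2) m0 by (simp_all add: Gamma_eq_zero_iff)
  have p1: "pochhammer a n = Gamma (a + of_nat n) / Gamma a" by (rule pochhammer_Gamma[OF a0(1)])
  have p2: "pochhammer (\<mu>+1) n = Gamma (\<mu> + 1 + of_nat n) / Gamma (\<mu>+1)" by (rule pochhammer_Gamma[OF m0])
  have g2: "Gamma (\<mu> + 1 + of_nat n) \<noteq> 0" using nz(3)[of n] by (simp add: Gamma_eq_zero_iff add_ac)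
  have p2w: "2 powr \<mu> \<noteq> 0" by (simp add: powr_def)
  have "of_real (sqrt pi) * rGamma (\<mu>/2+1) * pochhammer a n / (2 powr \<mu> * pochhammer (\<mu>+1) n)
      = (of_real (sqrt pi) * inverse (2 powr \<mu>) * Gamma (\<mu>+1)) / (Gamma a * Gamma (\<mu>/2+1)) * (Gamma (a + of_nat n) / Gamma (\<mu> + 1 + of_nat n))"
    unfolding p1 p2 rGamma_inverse_Gamma using g1 g2 p2w by (simp add: field_simps)
  also have "\<dots> = Gamma (a + of_nat n) / Gamma (\<mu> + 1 + of_nat n)"
    unfolding dup2 using g1 p2w by (simp add: field_simps)
  finally show ?thesis unfolding a_def by (simp add: add_ac)
qed

lemma omx_pow_nth: "((1 - fps_X)^i :: complex fps) $ k = (-1)^k * of_nat (i choose k)"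
proof (induction i arbitrary: k)
  case 0 then show ?case by (cases k) simp_all
next
  case (Suc i)
  have eq: "((1 - fps_X)^Suc i :: complex fps) = (1 - fps_X)^i - fps_X * (1 - fps_X)^i"
    by (simp add: algebra_simps)
  have "((1 - fps_X)^Suc i :: complex fps) $ k = ((1 - fps_X)^i) $ k - (if k = 0 then 0 else ((1 - fps_X)^i) $ (k - 1))"
    unfolding eq by (simp only: fps_sub_nth fps_X_mult_nth)
  also have "\<dots> = (-1)^k * of_nat (Suc i choose k)"
  proof (cases k)
    case 0 then show ?thesis using Suc.IH by simp
  next
    case (Suc k')
    then show ?thesis using Suc.IH by (simp add: algebra_simps)
  qed
  finally show ?case .
qed

definition wc :: "nat \<Rightarrow> complex \<Rightarrow> nat \<Rightarrow> complex" where
  "wc l x i = 2^l * of_real (sqrt pi) * cK l i / 2^i * (x/2)^(l-i)"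

lemma G_fps:
  fixes \<mu> x :: complex
  assumes x: "x \<noteq> 0"
  shows "(\<lambda>t. G \<mu> l t x) has_fps_expansion
     (\<Sum>i\<le>l. fps_const (wc l x i) * (1 - fps_X)^i) * (Bn ((\<mu>+1)/2) * (DD (\<mu>/2) oo YY x))"
proof -
  have s: "(\<lambda>t. \<Sum>i\<le>l. wc l x i * (1 - t)^i) has_fps_expansion (\<Sum>i\<le>l. fps_const (wc l x i) * (1 - fps_X)^i)"
    by (intro has_fps_expansion_sum has_fps_expansion_cmult_left has_fps_expansion_power
        has_fps_expansion_diff has_fps_expansion_1 has_fps_expansion_fps_X)
  have p: "(\<lambda>t. (\<Sum>i\<le>l. wc l x i * (1 - t)^i) * ((1 - t) powr (-((\<mu>+1)/2)) * (exp (- (t * x / (2 * (1 - t)))) * tildeI (\<mu>/2) (t * x / (2 * (1 - t))))))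
     has_fps_expansion (\<Sum>i\<le>l. fps_const (wc l x i) * (1 - fps_X)^i) * (Bn ((\<mu>+1)/2) * (DD (\<mu>/2) oo YY x))"
    by (rule has_fps_expansion_mult[OF s Pf_fps])
  have ev: "eventually (\<lambda>t::complex. t \<noteq> 1) (nhds 0)" by (rule t1_space_nhds) simp
  have "eventually (\<lambda>t. (\<Sum>i\<le>l. wc l x i * (1 - t)^i) * ((1 - t) powr (-((\<mu>+1)/2)) * (exp (- (t * x / (2 * (1 - t)))) * tildeI (\<mu>/2) (t * x / (2 * (1 - t))))) = G \<mu> l t x) (nhds 0)"
    using ev
  proof eventually_elim
    case (elim t)
    show ?case unfolding wc_def using G_eq[OF x elim] by (rule sym)
  qed
  thus ?thesis using p by (subst (asm) has_fps_expansion_cong) auto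
qed

lemma FG_nth:
  fixes P :: "complex fps"
  shows "((\<Sum>i\<le>l. fps_const (c i) * (1 - fps_X)^i) * P) $ j
    = (\<Sum>i\<le>l. \<Sum>k\<in>{0..j}. c i * ((-1)^k * of_nat (i choose k) * P $ (j - k)))"
proof -
  have "(\<Sum>i\<le>l. fps_const (c i) * (1 - fps_X)^i) * P = (\<Sum>i\<le>l. fps_const (c i) * ((1 - fps_X)^i * P))"
    by (simp only: sum_distrib_right mult.assoc)
  hence "((\<Sum>i\<le>l. fps_const (c i) * (1 - fps_X)^i) * P) $ j = (\<Sum>i\<le>l. c i * ((1 - fps_X)^i * P) $ j)"
    by (simp only: fps_sum_nth fps_mult_left_const_nth)
  also have "\<dots> = (\<Sum>i\<le>l. \<Sum>k\<in>{0..j}. c i * ((-1)^k * of_nat (i choose k) * P $ (j - k)))"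
    by (simp only: fps_mult_nth omx_pow_nth sum_distrib_left)
  finally show ?thesis .
qed

lemma term_aux:
  fixes A B P2l P2i X2 Xi s R Pa P2m Pm S C L cK F2 fk fl fi Ga Gm :: complex
  assumes h1: "cK * C = F2 / (fk * fl * fi)" and h2: "P2l / P2i * X2 = Xi"
    and h3: "s * R * Pa / (P2m * Pm) = Ga / Gm"
  shows "A / (P2m * B) * ((P2l * s * cK / P2i * X2) * (S * C * (R * Pa / Pm * L)))
       = A / B * (S * Ga * F2 / (fk * Gm * fl * fi) * L * Xi)"
proof -
  have "A / (P2m * B) * ((P2l * s * cK / P2i * X2) * (S * C * (R * Pa / Pm * L)))
      = (A / B) * S * L * ((cK * C) * (P2l / P2i * X2) * (s * R * Pa / (P2m * Pm)))"
    by (simp only: divide_inverse inverse_mult_distrib mult_ac)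
  also have "\<dots> = (A / B) * S * L * ((F2 / (fk * fl * fi)) * Xi * (Ga / Gm))" by (simp only: h1 h2 h3)
  also have "\<dots> = A / B * (S * Ga * F2 / (fk * Gm * fl * fi) * L * Xi)"
    by (simp only: divide_inverse inverse_mult_distrib mult_ac)
  finally show ?thesis .
qed

lemma ckC: "k \<le> i \<Longrightarrow> i \<le> l \<Longrightarrow> cK l i * of_nat (i choose k)
   = fact (2*l - (l-i)) / (fact k * fact (l - (l-i) - k) * fact (l-i))"
proof -
  assume ki: "k \<le> i" and il: "i \<le> l"
  have c: "(of_nat (i choose k) :: complex) = fact i / (fact k * fact (i - k))"
    using binomial_fact[OF ki] by simp
  have e: "2*l - (l-i) = l + i" "l - (l-i) - k = i - k" using ki il by simp_all
  show ?thesis unfolding cK_def c e using il by (simp add: field_simps)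
qed

lemma pow2x: "i \<le> l \<Longrightarrow> (2::complex)^l / 2^i * (x/2)^(l-i) = x^(l-i)"
proof -
  assume il: "i \<le> l"
  have "(2::complex)^l = 2^i * 2^(l-i)" using il by (simp flip: power_add)
  thus ?thesis by (simp add: power_divide)
qed


lemma ckC': "i + k \<le> l \<Longrightarrow> cK l (l-i) * of_nat ((l-i) choose k)
   = fact (2*l - i) / (fact k * fact (l - i - k) * fact i)"
  using ckC[of k "l-i" l] by (simp add: diff_diff_cancel)

lemma M_factor:
  assumes "f \<noteq> (0::complex)"
  shows "A / (f * P * B) * (F * f) = A / (P * B) * F"
  using assms by (simp add: divide_inverse inverse_mult_distrib mult_ac)

lemma conj1:
  fixes \<mu> :: complex and l j :: nat and xr :: real
  assumes mu: "\<forall>n::nat. \<mu> \<noteq> - of_nat (Suc n)" and xpos: "xr > 0"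
  shows "M \<mu> l j xr = Gamma (of_nat j + \<mu> + 1) / Gamma (of_nat j + (\<mu> + 1) / 2) *
      (\<Sum>k\<le>j. \<Sum>i\<in>{i. i + k \<le> l}.
         (-1)^k * Gamma (of_nat (j - k) + (\<mu> + 1) / 2) * fact (2*l - i)
         / (fact k * Gamma (of_nat (j - k) + \<mu> + 1) * fact (l - i - k) * fact i)
         * laguerre (j - k) \<mu> (complex_of_real xr) * complex_of_real xr ^ i)"
proof -
  define x where "x = complex_of_real xr"
  have x0: "x \<noteq> 0" using xpos by (simp add: x_def)
  define PF where "PF = Bn ((\<mu>+1)/2) * (DD (\<mu>/2) oo YY x)"
  define FG where "FG = (\<Sum>i\<le>l. fps_const (wc l x i) * (1 - fps_X)^i) * PF"
  have ex: "(\<lambda>t. G \<mu> l t x) has_fps_expansion FG" unfolding FG_def PF_def by (rule G_fps[OF x0])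
  have d: "(deriv ^^ j) (\<lambda>t. G \<mu> l t x) 0 = FG $ j * fact j"
    using fps_nth_fps_expansion[OF ex, of j] by simp
  define A where "A = Gamma (of_nat j + \<mu> + 1)"
  define B where "B = Gamma (of_nat j + (\<mu>+1)/2)"
  define T where "T k i = (-1)^k * Gamma (of_nat (j - k) + (\<mu> + 1) / 2) * fact (2*l - i)
         / (fact k * Gamma (of_nat (j - k) + \<mu> + 1) * fact (l - i - k) * fact i)
         * laguerre (j - k) \<mu> x * x ^ i" for k i
  define f where "f i k = A / (2 powr \<mu> * B) * (wc l x i * ((-1)^k * of_nat (i choose k) * PF $ (j - k)))" for i k
  have "M \<mu> l j xr = A / (2 powr \<mu> * B) * FG $ j"
    unfolding M_def x_def[symmetric] d A_def[symmetric] B_def[symmetric] by (rule M_factor) simp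
  also have "\<dots> = (\<Sum>i\<le>l. \<Sum>k\<in>{0..j}. f i k)"
    unfolding FG_def FG_nth f_def sum_distrib_left ..
  also have "\<dots> = (\<Sum>k\<in>{0..j}. \<Sum>i\<le>l. f i k)" by (rule sum.swap)
  also have "\<dots> = (\<Sum>k\<le>j. \<Sum>i\<in>{i. i + k \<le> l}. A / B * T k i)"
  proof (rule sum.cong)
    show "{0..j} = {..j}" by auto
  next
    fix k assume "k \<in> {..j}"
    hence kj: "k \<le> j" by simp
    have "(\<Sum>i\<le>l. f i k) = (\<Sum>i\<in>{k..l}. f i k)"
      by (rule sum.mono_neutral_right) (auto simp: f_def binomial_eq_0)
    also have "(\<Sum>i\<in>{i. i + k \<le> l}. A / B * T k i) = \<dots>"
    proof (rule sum.reindex_bij_witness[of _ "\<lambda>i. l - i" "\<lambda>i. l - i"])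
      fix i assume i: "i \<in> {i. i + k \<le> l}"
      hence ik: "i + k \<le> l" by simp
      have w: "wc l x (l - i) = 2^l * of_real (sqrt pi) * cK l (l-i) / 2^(l-i) * (x/2)^i"
        unfolding wc_def using ik by (simp add: diff_diff_cancel)
      have h2: "(2::complex)^l / 2^(l-i) * (x/2)^i = x^i"
        using pow2x[of "l-i" l x] ik by (simp add: diff_diff_cancel)
      show "f (l - i) k = A / B * T k i"
        unfolding f_def T_def w PF_def Pcoef[OF mu]
        by (rule term_aux[OF ckC'[OF ik] h2 gamma_key[OF mu]])
    qed auto
    finally show "(\<Sum>i\<le>l. f i k) = (\<Sum>i\<in>{i. i + k \<le> l}. A / B * T k i)" by simp
  qed
  finally show ?thesis unfolding T_def A_def B_def x_def sum_distrib_left .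
qed

lemma gch:
  fixes \<mu> :: complex
  assumes mu: "\<forall>n::nat. \<mu> \<noteq> - of_nat (Suc n)" and nq: "n \<le> q"
  shows "(of_nat q + \<mu>) gchoose (q - n) = Gamma (of_nat q + \<mu> + 1) / (Gamma (of_nat n + \<mu> + 1) * fact (q - n))"
proof -
  have e: "of_nat q + \<mu> - of_nat (q - n) + 1 = of_nat n + \<mu> + 1" using nq by (simp add: of_nat_diff)
  have e2: "of_nat n + \<mu> + 1 + of_nat (q - n) = of_nat q + \<mu> + 1" using nq by (simp add: of_nat_diff)
  show ?thesis unfolding gbinomial_pochhammer' e pochhammer_Gamma[OF notin_aux(3)[OF mu]] e2
    by simp
qed

lemma te_aux:
  fixes S1 S2 Ga Gm Gn F2 fk fl fi fn fq X1 X2 :: complex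
  assumes "Gm \<noteq> 0"
  shows "S1 * Ga * F2 / (fk * Gm * fl * fi) * (S2 / fn * (Gm / (Gn * fq)) * X2) * X1
     = S1 * S2 * Ga / Gn * F2 / (fk * fn * fi * fq * fl) * (X1 * X2)"
  using assms by (simp add: divide_inverse inverse_mult_distrib mult_ac)

lemma te:
  fixes \<mu> x :: complex
  assumes mu: "\<forall>n::nat. \<mu> \<noteq> - of_nat (Suc n)" and nq: "n \<le> j - k"
  shows "(-1)^k * Gamma (of_nat (j - k) + (\<mu> + 1) / 2) * fact (2*l - i)
         / (fact k * Gamma (of_nat (j - k) + \<mu> + 1) * fact (l - i - k) * fact i)
         * ((-1)^n / fact n * ((of_nat (j - k) + \<mu>) gchoose (j - k - n)) * x^n) * x^i
   = (-1)^(k+n) * Gamma (of_nat (j - k) + (\<mu> + 1) / 2) / Gamma (of_nat n + \<mu> + 1)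
         * fact (2*l + n - (i+n)) / (fact k * fact n * fact (i + n - n) * fact (j - k - n) * fact (l + n - (i+n) - k))
         * x^(i+n)"
proof -
  have g0: "Gamma (of_nat (j - k) + \<mu> + 1) \<noteq> 0"
    using notin_aux(3)[OF mu, of "j-k"] by (simp add: Gamma_eq_zero_iff)
  have n1: "2*l + n - (i+n) = 2*l - i" "i + n - n = i" "l + n - (i+n) - k = l - i - k" by simp_all
  have p: "(-1::complex)^(k+n) = (-1)^k * (-1)^n" by (simp add: power_add)
  have xx: "x^(i+n) = x^i * x^n" by (simp add: power_add)
  show ?thesis unfolding gch[OF mu nq] n1 p xx by (rule te_aux[OF g0])
qed


lemma fin_I: "finite {i::nat. i + k \<le> l}"
  by (rule finite_subset[of _ "{..l}"]) auto

lemma fin_S: "finite (Sidx l j K)"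
  unfolding Sidx_def by (rule finite_subset[of _ "{..j} \<times> {..j}"]) auto

lemma conj2:
  fixes \<mu> x :: complex
  assumes mu: "\<forall>n::nat. \<mu> \<noteq> - of_nat (Suc n)"
  shows "Gamma (of_nat j + \<mu> + 1) / Gamma (of_nat j + (\<mu> + 1) / 2) *
      (\<Sum>k\<le>j. \<Sum>i\<in>{i. i + k \<le> l}.
         (-1)^k * Gamma (of_nat (j - k) + (\<mu> + 1) / 2) * fact (2*l - i)
         / (fact k * Gamma (of_nat (j - k) + \<mu> + 1) * fact (l - i - k) * fact i)
         * laguerre (j - k) \<mu> x * x ^ i)
      = (\<Sum>k\<le>j + l. beta \<mu> l j k * x ^ k)"
proof -
  define C where "C = Gamma (of_nat j + \<mu> + 1) / Gamma (of_nat j + (\<mu> + 1) / 2)"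
  define e where "e m n K = (-1)^(m+n) * Gamma (of_nat (j - m) + (\<mu> + 1) / 2) / Gamma (of_nat n + \<mu> + 1)
        * fact (2*l + n - K) / (fact m * fact n * fact (K - n) * fact (j - m - n) * fact (l + n - K - m))" for m n K
  define SS where "SS = Sigma {..j} (\<lambda>k. Sigma {i. i + k \<le> l} (\<lambda>i. {..j-k}))"
  define TT where "TT = Sigma {..j+l} (\<lambda>K. Sidx l j K)"
  have step1: "(\<Sum>i\<in>{i. i + k \<le> l}.
         (-1)^k * Gamma (of_nat (j - k) + (\<mu> + 1) / 2) * fact (2*l - i)
         / (fact k * Gamma (of_nat (j - k) + \<mu> + 1) * fact (l - i - k) * fact i)
         * laguerre (j - k) \<mu> x * x ^ i)
      = (\<Sum>i\<in>{i. i + k \<le> l}. \<Sum>n\<le>j-k. e k n (i+n) * x^(i+n))" for k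
  proof (intro sum.cong refl)
    fix i
    show "(-1)^k * Gamma (of_nat (j - k) + (\<mu> + 1) / 2) * fact (2*l - i)
         / (fact k * Gamma (of_nat (j - k) + \<mu> + 1) * fact (l - i - k) * fact i)
         * laguerre (j - k) \<mu> x * x ^ i = (\<Sum>n\<le>j-k. e k n (i+n) * x^(i+n))"
      unfolding laguerre_def sum_distrib_left sum_distrib_right
    proof (intro sum.cong refl)
      fix n assume "n \<in> {..j-k}"
      hence nq: "n \<le> j - k" by simp
      show "(-1)^k * Gamma (of_nat (j - k) + (\<mu> + 1) / 2) * fact (2*l - i)
         / (fact k * Gamma (of_nat (j - k) + \<mu> + 1) * fact (l - i - k) * fact i)
         * ((-1)^n / fact n * ((of_nat (j - k) + \<mu>) gchoose (j - k - n)) * x^n) * x^i = e k n (i+n) * x^(i+n)"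
        unfolding e_def by (rule te[OF mu nq])
    qed
  qed
  have "(\<Sum>k\<le>j. \<Sum>i\<in>{i. i + k \<le> l}. \<Sum>n\<le>j-k. e k n (i+n) * x^(i+n))
      = (\<Sum>(k,p)\<in>SS. (\<lambda>(i,n). e k n (i+n) * x^(i+n)) p)"
  proof -
    have "(\<Sum>k\<le>j. \<Sum>i\<in>{i. i + k \<le> l}. \<Sum>n\<le>j-k. e k n (i+n) * x^(i+n))
       = (\<Sum>k\<le>j. \<Sum>(i,n)\<in>Sigma {i. i + k \<le> l} (\<lambda>i. {..j-k}). e k n (i+n) * x^(i+n))"
      by (intro sum.cong refl sum.Sigma fin_I) auto
    also have "\<dots> = (\<Sum>(k,p)\<in>SS. (\<lambda>(i,n). e k n (i+n) * x^(i+n)) p)"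
      unfolding SS_def by (rule sum.Sigma) (auto intro: finite_SigmaI fin_I)
    finally show ?thesis .
  qed
  also have "\<dots> = (\<Sum>(K,q)\<in>TT. (\<lambda>(m,n). e m n K * x^K) q)"
    by (rule sum.reindex_bij_witness[of _ "\<lambda>(K,(m,n)). (m,(K-n,n))" "\<lambda>(k,(i,n)). (i+n,(k,n))"])
       (auto simp: SS_def TT_def Sidx_def)
  also have "\<dots> = (\<Sum>K\<le>j+l. \<Sum>(m,n)\<in>Sidx l j K. e m n K * x^K)"
    unfolding TT_def by (rule sum.Sigma[symmetric]) (auto intro: fin_S)
  finally have main: "(\<Sum>k\<le>j. \<Sum>i\<in>{i. i + k \<le> l}. \<Sum>n\<le>j-k. e k n (i+n) * x^(i+n))
      = (\<Sum>K\<le>j+l. \<Sum>(m,n)\<in>Sidx l j K. e m n K * x^K)" .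
  have "(\<Sum>k\<le>j + l. beta \<mu> l j k * x ^ k) = C * (\<Sum>K\<le>j+l. \<Sum>(m,n)\<in>Sidx l j K. e m n K * x^K)"
    unfolding beta_def C_def[symmetric] e_def sum_distrib_left sum_distrib_right
    by (intro sum.cong refl) (auto simp: mult.assoc split: prod.splits)
  thus ?thesis unfolding C_def[symmetric] step1 main by simp
qed

theorem proposition3p1:
  fixes \<mu> :: complex and l j :: nat and x :: real
  assumes "\<forall>n::nat. \<mu> \<noteq> - of_nat (Suc n)"
    and "x > 0"
  shows "M \<mu> l j x =
      Gamma (of_nat j + \<mu> + 1) / Gamma (of_nat j + (\<mu> + 1) / 2) *
      (\<Sum>k\<le>j. \<Sum>i\<in>{i. i + k \<le> l}.
         (-1)^k * Gamma (of_nat (j - k) + (\<mu> + 1) / 2) * fact (2*l - i)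
         / (fact k * Gamma (of_nat (j - k) + \<mu> + 1) * fact (l - i - k) * fact i)
         * laguerre (j - k) \<mu> (complex_of_real x) * complex_of_real x ^ i)
    \<and> Gamma (of_nat j + \<mu> + 1) / Gamma (of_nat j + (\<mu> + 1) / 2) *
      (\<Sum>k\<le>j. \<Sum>i\<in>{i. i + k \<le> l}.
         (-1)^k * Gamma (of_nat (j - k) + (\<mu> + 1) / 2) * fact (2*l - i)
         / (fact k * Gamma (of_nat (j - k) + \<mu> + 1) * fact (l - i - k) * fact i)
         * laguerre (j - k) \<mu> (complex_of_real x) * complex_of_real x ^ i)
      = (\<Sum>k\<le>j + l. beta \<mu> l j k * complex_of_real x ^ k)"
  using conj1[OF assms] conj2[OF assms(1)] by (rule conjI)

end
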